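(* Let $k\ge 2$, $r\ge k$, and let $H$ be a complete $k$-partite graph on $h$ vertices. There exists $\gamma_0>0$ such that for every $0<\gamma<\gamma_0$ there exist $\zeta>0$ and $n_0$ with the following property: for every $n\ge n_0$, if $P$ is a complete $s$-partite $K_{r+1}$-free graph on $n$ vertices with $\mathcal N(H,P)\ge \mathrm{ex}(n,H,K_{r+1})-\zeta n^h$, then $s=r$ and every part of $P$ has size at least $\gamma n$.
   Context: $\mathcal N(H,G)$ is the number of subgraphs of $G$ isomorphic to $H$; $\mathrm{ex}(n,H,K_{r+1})$ is the maximum of $\mathcal N(H,G)$ over $n$-vertex graphs $G$ containing no clique $K_{r+1}$. *)

theory Defs
  imports Complex_Main "HOL-Library.Disjoint_Sets"
begin

definition sgraph :: "'a set \<Rightarrow> 'a set set \<Rightarrow> bool" where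
  "sgraph V E \<longleftrightarrow> finite V \<and> (\<forall>e\<in>E. e \<subseteq> V \<and> card e = 2)"

definition graph_iso :: "'a set \<Rightarrow> 'a set set \<Rightarrow> 'b set \<Rightarrow> 'b set set \<Rightarrow> bool" where
  "graph_iso V1 E1 V2 E2 \<longleftrightarrow>
     (\<exists>f. bij_betw f V1 V2 \<and> (\<forall>u\<in>V1. \<forall>v\<in>V1. {u, v} \<in> E1 \<longleftrightarrow> {f u, f v} \<in> E2))"

definition count_copies :: "'b set \<Rightarrow> 'b set set \<Rightarrow> 'a set \<Rightarrow> 'a set set \<Rightarrow> nat" where
  "count_copies HV HE GV GE =
     card {(U, F). U \<subseteq> GV \<and> F \<subseteq> GE \<and> (\<forall>e\<in>F. e \<subseteq> U) \<and> graph_iso HV HE U F}"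

definition clique_free :: "'a set \<Rightarrow> 'a set set \<Rightarrow> nat \<Rightarrow> bool" where
  "clique_free V E m \<longleftrightarrow>
     \<not> (\<exists>S\<subseteq>V. card S = m \<and> (\<forall>u\<in>S. \<forall>v\<in>S. u \<noteq> v \<longrightarrow> {u, v} \<in> E))"

text \<open>ex(n,H,K_m): maximum of N(H,G) over n-vertex K_m-free graphs G
  (vertex set {0..<n} without loss of generality).\<close>
definition ex_gen :: "nat \<Rightarrow> 'b set \<Rightarrow> 'b set set \<Rightarrow> nat \<Rightarrow> nat" where
  "ex_gen n HV HE m =
     Max {count_copies HV HE {..<n} E | E. sgraph {..<n} E \<and> clique_free {..<n} E m}"

definition complete_multipartite :: "'a set \<Rightarrow> 'a set set \<Rightarrow> 'a set set \<Rightarrow> bool" where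
  "complete_multipartite V E Ps \<longleftrightarrow>
     partition_on V Ps \<and>
     E = {{u, v} | u v. u \<in> V \<and> v \<in> V \<and> (\<forall>X\<in>Ps. \<not> (u \<in> X \<and> v \<in> X))}"

end

theory Submission
  imports Defs "HOL-Analysis.Analysis"
begin



definition Col :: "'b set \<Rightarrow> 'b set set \<Rightarrow> nat \<Rightarrow> ('b \<Rightarrow> nat) set" where
  "Col HV HE r = {\<tau> \<in> HV \<rightarrow>\<^sub>E {..<r}. \<forall>u\<in>HV. \<forall>v\<in>HV. {u,v} \<in> HE \<longrightarrow> \<tau> u \<noteq> \<tau> v}"

definition pp :: "'b set \<Rightarrow> 'b set set \<Rightarrow> nat \<Rightarrow> (nat \<Rightarrow> real) \<Rightarrow> real" where
  "pp HV HE r x = (\<Sum>\<tau>\<in>Col HV HE r. \<Prod>v\<in>HV. x (\<tau> v))"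

definition smpx :: "nat \<Rightarrow> (nat \<Rightarrow> real) set" where
  "smpx r = {x. (\<forall>l<r. 0 \<le> x l \<and> x l \<le> 1) \<and> (\<forall>l\<ge>r. x l = 0) \<and> (\<Sum>l<r. x l) = 1}"

lemma finite_Col: "finite HV \<Longrightarrow> finite (Col HV HE r)"
  unfolding Col_def by (rule finite_subset[of _ "HV \<rightarrow>\<^sub>E {..<r}"]) (auto intro: finite_PiE)

lemma compact_smpx: "compact (smpx r)"
proof -
  define S where "S = (\<lambda>l::nat. if l < r then {0..1::real} else {0})"
  have "compactin (product_topology (\<lambda>_. euclidean) UNIV) (PiE UNIV S)"
    by (subst compactin_PiE) (auto simp: S_def)
  then have c: "compact (PiE UNIV S)"
    by (simp add: euclidean_product_topology)
  have cl: "closed {x::nat\<Rightarrow>real. (\<Sum>l<r. x l) = 1}"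
    by (rule closed_Collect_eq) (auto intro!: continuous_intros)
  have "smpx r = PiE UNIV S \<inter> {x. (\<Sum>l<r. x l) = 1}"
  proof (intro set_eqI iffI)
    fix x assume "x \<in> smpx r" then show "x \<in> PiE UNIV S \<inter> {x. (\<Sum>l<r. x l) = 1}"
      by (auto simp: smpx_def S_def PiE_iff)
  next
    fix x assume a: "x \<in> PiE UNIV S \<inter> {x. (\<Sum>l<r. x l) = 1}"
    then have "\<forall>l. x l \<in> S l" by (auto simp: PiE_iff)
    then have "\<forall>l. x l \<in> (if l < r then {0..1} else {0})" unfolding S_def by simp
    then have *: "\<And>l. x l \<in> (if l < r then {0..1} else {0})" by blast
    have "\<forall>l<r. 0 \<le> x l \<and> x l \<le> 1"
    proof (intro allI impI)
      fix l assume "l < r" then have "x l \<in> {0..1}" using *[of l] by simp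
      then show "0 \<le> x l \<and> x l \<le> 1" by simp
    qed
    moreover have "\<forall>l\<ge>r. x l = 0"
    proof (intro allI impI)
      fix l assume "r \<le> l" then have "x l \<in> {0}" using *[of l] by simp
      then show "x l = 0" by simp
    qed
    ultimately show "x \<in> smpx r" using a unfolding smpx_def by blast
  qed
  then show ?thesis using c cl by auto
qed

lemma continuous_pp: "continuous_on A (pp HV HE r)"
  unfolding pp_def by (intro continuous_intros continuous_on_subset[OF continuous_on_product_coordinates]) auto

lemma prod_diff_le:
  fixes a b :: "'i \<Rightarrow> real"
  assumes "finite I" "\<And>i. i \<in> I \<Longrightarrow> 0 \<le> a i \<and> a i \<le> 1 \<and> 0 \<le> b i \<and> b i \<le> 1"
  shows "\<bar>(\<Prod>i\<in>I. a i) - (\<Prod>i\<in>I. b i)\<bar> \<le> (\<Sum>i\<in>I. \<bar>a i - b i\<bar>)"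
  using assms
proof (induction I rule: finite_induct)
  case empty then show ?case by simp
next
  case (insert i I)
  define A where "A = (\<Prod>i\<in>I. a i)"
  define B where "B = (\<Prod>i\<in>I. b i)"
  have A: "0 \<le> A" "A \<le> 1" unfolding A_def using insert by (auto intro: prod_nonneg prod_le_1)
  have B: "0 \<le> B" "B \<le> 1" unfolding B_def using insert by (auto intro: prod_nonneg prod_le_1)
  have IH: "\<bar>A - B\<bar> \<le> (\<Sum>i\<in>I. \<bar>a i - b i\<bar>)" using insert unfolding A_def B_def by auto
  have ai: "0 \<le> a i" "a i \<le> 1" "0 \<le> b i" "b i \<le> 1" using insert by auto
  have "a i * A - b i * B = (a i - b i) * A + b i * (A - B)" by (simp add: algebra_simps)
  then have "\<bar>a i * A - b i * B\<bar> \<le> \<bar>a i - b i\<bar> * A + b i * \<bar>A - B\<bar>"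
  proof -
    have "\<bar>(a i - b i) * A + b i * (A - B)\<bar> \<le> \<bar>(a i - b i) * A\<bar> + \<bar>b i * (A - B)\<bar>"
      by (rule abs_triangle_ineq)
    also have "\<dots> = \<bar>a i - b i\<bar> * A + b i * \<bar>A - B\<bar>"
      using A ai by (simp add: abs_mult)
    finally show ?thesis using \<open>a i * A - b i * B = _\<close> by simp
  qed
  also have "\<dots> \<le> \<bar>a i - b i\<bar> + \<bar>A - B\<bar>"
  proof -
    have "\<bar>a i - b i\<bar> * A \<le> \<bar>a i - b i\<bar>" using A by (simp add: mult_left_le)
    moreover have "b i * \<bar>A - B\<bar> \<le> \<bar>A - B\<bar>" using ai by (simp add: mult_left_le_one_le)
    ultimately show ?thesis by simp
  qed
  finally have fin: "\<bar>a i * A - b i * B\<bar> \<le> \<bar>a i - b i\<bar> + \<bar>A - B\<bar>" .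
  have e1: "(\<Prod>i\<in>insert i I. a i) = a i * A" unfolding A_def using insert(1,2) by (rule prod.insert)
  have e2: "(\<Prod>i\<in>insert i I. b i) = b i * B" unfolding B_def using insert(1,2) by (rule prod.insert)
  have e3: "(\<Sum>i\<in>insert i I. \<bar>a i - b i\<bar>) = \<bar>a i - b i\<bar> + (\<Sum>i\<in>I. \<bar>a i - b i\<bar>)"
    using insert(1,2) by (rule sum.insert)
  show ?case unfolding e1 e2 e3 using fin IH by linarith
qed




lemma fiber_sum:
  assumes "i < r" "j < r" "i \<noteq> j" "x i = 0" "y i + y j = x j"
    "\<And>l. l \<noteq> i \<Longrightarrow> l \<noteq> j \<Longrightarrow> y l = x l" "t < r"
  shows "(\<Sum>l\<in>{l. l < r \<and> (if l = i then j else l) = t}. y l) = x t"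
proof -
  consider "t = j" | "t = i" | "t \<noteq> i" "t \<noteq> j" by blast
  then show ?thesis
  proof cases
    case 1
    then have "{l. l < r \<and> (if l = i then j else l) = t} = {i, j}" using assms by auto
    then show ?thesis using assms 1 by simp
  next
    case 2
    then have "{l. l < r \<and> (if l = i then j else l) = t} = {}" using assms by auto
    then show ?thesis using assms 2 by simp
  next
    case 3
    then have "{l. l < r \<and> (if l = i then j else l) = t} = {t}" using assms by auto
    then show ?thesis using assms 3 by simp
  qed
qed

lemma pp_split:
  fixes x y :: "nat \<Rightarrow> real"
  assumes fin: "finite HV" and ij: "i < r" "j < r" "i \<noteq> j" and xi: "x i = 0"
    and yij: "y i + y j = x j" and yo: "\<And>l. l \<noteq> i \<Longrightarrow> l \<noteq> j \<Longrightarrow> y l = x l"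
  defines "M \<equiv> (\<lambda>\<sigma>. restrict (\<lambda>v. if \<sigma> v = i then j else \<sigma> v) HV)"
  shows "pp HV HE r y = pp HV HE r x +
     (\<Sum>\<sigma>\<in>{\<sigma>\<in>Col HV HE r. M \<sigma> \<notin> Col HV HE r}. \<Prod>v\<in>HV. y (\<sigma> v))"
proof -
  define Fun where "Fun = HV \<rightarrow>\<^sub>E {..<r}"
  define C where "C = Col HV HE r"
  define g where "g = (\<lambda>\<sigma>. \<Prod>v\<in>HV. y (\<sigma> v))"
  have finF: "finite Fun" unfolding Fun_def using fin by (auto intro: finite_PiE)
  have finC: "finite C" unfolding C_def using fin by (rule finite_Col)
  have CF: "C \<subseteq> Fun" unfolding C_def Col_def Fun_def by auto
  have MF: "M \<sigma> \<in> Fun" if "\<sigma> \<in> Fun" for \<sigma>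
    using that ij unfolding M_def Fun_def by (auto simp: PiE_iff)
  have MC: "\<sigma> \<in> C" if "\<sigma> \<in> Fun" "M \<sigma> \<in> C" for \<sigma>
  proof -
    have "\<sigma> u \<noteq> \<sigma> v" if "u \<in> HV" "v \<in> HV" "{u,v} \<in> HE" for u v
    proof
      assume e: "\<sigma> u = \<sigma> v"
      have "M \<sigma> u \<noteq> M \<sigma> v" using \<open>M \<sigma> \<in> C\<close> that unfolding C_def Col_def by blast
      moreover have "M \<sigma> u = M \<sigma> v" using e that unfolding M_def by auto
      ultimately show False by simp
    qed
    then show ?thesis using \<open>\<sigma> \<in> Fun\<close> unfolding C_def Col_def Fun_def by auto
  qed
  have fib: "{\<sigma> \<in> Fun. M \<sigma> = \<tau>} = PiE HV (\<lambda>v. {l. l < r \<and> (if l = i then j else l) = \<tau> v})"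
    if "\<tau> \<in> Fun" for \<tau>
  proof (intro set_eqI iffI)
    fix \<sigma> assume "\<sigma> \<in> {\<sigma> \<in> Fun. M \<sigma> = \<tau>}"
    then have s: "\<sigma> \<in> Fun" "M \<sigma> = \<tau>" by auto
    have "\<forall>v\<in>HV. (if \<sigma> v = i then j else \<sigma> v) = \<tau> v"
    proof
      fix v assume v: "v \<in> HV"
      have "M \<sigma> v = \<tau> v" using s(2) by simp
      then show "(if \<sigma> v = i then j else \<sigma> v) = \<tau> v" using v unfolding M_def by simp
    qed
    then show "\<sigma> \<in> PiE HV (\<lambda>v. {l. l < r \<and> (if l = i then j else l) = \<tau> v})"
      using s(1) unfolding Fun_def by (auto simp: PiE_iff)
  next
    fix \<sigma> assume s: "\<sigma> \<in> PiE HV (\<lambda>v. {l. l < r \<and> (if l = i then j else l) = \<tau> v})"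
    then have "\<sigma> \<in> Fun" unfolding Fun_def by (auto simp: PiE_iff)
    moreover have "M \<sigma> = \<tau>"
    proof
      fix v show "M \<sigma> v = \<tau> v"
        using s that unfolding M_def Fun_def by (cases "v \<in> HV") (auto simp: PiE_iff extensional_def)
    qed
    ultimately show "\<sigma> \<in> {\<sigma> \<in> Fun. M \<sigma> = \<tau>}" by simp
  qed
  have "(\<Sum>\<sigma>\<in>{\<sigma>\<in>C. M \<sigma> \<in> C}. g \<sigma>) = (\<Sum>\<sigma>\<in>{\<sigma>\<in>Fun. M \<sigma> \<in> C}. g \<sigma>)"
    using CF MC by (intro sum.cong) auto
  also have "\<dots> = (\<Sum>\<tau>\<in>C. \<Sum>\<sigma>\<in>{\<sigma>\<in>{\<sigma>\<in>Fun. M \<sigma> \<in> C}. M \<sigma> = \<tau>}. g \<sigma>)"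
    by (rule sum.group[symmetric]) (use finF finC in auto)
  also have "\<dots> = (\<Sum>\<tau>\<in>C. \<Sum>\<sigma>\<in>PiE HV (\<lambda>v. {l. l < r \<and> (if l = i then j else l) = \<tau> v}). g \<sigma>)"
  proof (rule sum.cong[OF refl])
    fix \<tau> assume "\<tau> \<in> C"
    then have "{\<sigma>\<in>{\<sigma>\<in>Fun. M \<sigma> \<in> C}. M \<sigma> = \<tau>} = {\<sigma> \<in> Fun. M \<sigma> = \<tau>}" by auto
    then show "(\<Sum>\<sigma>\<in>{\<sigma>\<in>{\<sigma>\<in>Fun. M \<sigma> \<in> C}. M \<sigma> = \<tau>}. g \<sigma>) =
       (\<Sum>\<sigma>\<in>PiE HV (\<lambda>v. {l. l < r \<and> (if l = i then j else l) = \<tau> v}). g \<sigma>)"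
      using fib[of \<tau>] \<open>\<tau> \<in> C\<close> CF by auto
  qed
  also have "\<dots> = (\<Sum>\<tau>\<in>C. \<Prod>v\<in>HV. \<Sum>l\<in>{l. l < r \<and> (if l = i then j else l) = \<tau> v}. y l)"
    unfolding g_def by (intro sum.cong[OF refl] prod_sum_PiE[symmetric]) (use fin in auto)
  also have "\<dots> = (\<Sum>\<tau>\<in>C. \<Prod>v\<in>HV. x (\<tau> v))"
  proof (intro sum.cong[OF refl] prod.cong[OF refl])
    fix \<tau> v assume "\<tau> \<in> C" "v \<in> HV"
    then have "\<tau> v < r" unfolding C_def Col_def by auto
    then show "(\<Sum>l\<in>{l. l < r \<and> (if l = i then j else l) = \<tau> v}. y l) = x (\<tau> v)"
      by (intro fiber_sum[of i r j x y]) (use ij xi yij yo in auto)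
  qed
  finally have eq: "(\<Sum>\<sigma>\<in>{\<sigma>\<in>C. M \<sigma> \<in> C}. g \<sigma>) = pp HV HE r x"
    unfolding pp_def C_def by simp
  have e1: "pp HV HE r y = (\<Sum>\<sigma>\<in>C. g \<sigma>)" unfolding pp_def C_def g_def by simp
  have e2: "C = {\<sigma>\<in>C. M \<sigma> \<in> C} \<union> {\<sigma>\<in>C. M \<sigma> \<notin> C}" by auto
  have e3: "(\<Sum>\<sigma>\<in>{\<sigma>\<in>C. M \<sigma> \<in> C} \<union> {\<sigma>\<in>C. M \<sigma> \<notin> C}. g \<sigma>) =
     (\<Sum>\<sigma>\<in>{\<sigma>\<in>C. M \<sigma> \<in> C}. g \<sigma>) + (\<Sum>\<sigma>\<in>{\<sigma>\<in>C. M \<sigma> \<notin> C}. g \<sigma>)"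
    by (rule sum.union_disjoint) (use finC in auto)
  have "pp HV HE r y = pp HV HE r x + (\<Sum>\<sigma>\<in>{\<sigma>\<in>C. M \<sigma> \<notin> C}. g \<sigma>)"
    using e1 e2 e3 eq by metis
  then show ?thesis unfolding C_def g_def .
qed




lemma part_unique:
  assumes "partition_on A P" "X \<in> P" "Y \<in> P" "x \<in> X" "x \<in> Y"
  shows "X = Y"
  using assms partition_onD2[OF assms(1)] unfolding disjoint_def by blast

lemma part_the:
  assumes "partition_on A P" "x \<in> A"
  shows "(THE X. X \<in> P \<and> x \<in> X) \<in> P \<and> x \<in> (THE X. X \<in> P \<and> x \<in> X)"
proof -
  obtain X where X: "X \<in> P" "x \<in> X" using partition_onD1[OF assms(1)] assms(2) by blast
  have "(THE X. X \<in> P \<and> x \<in> X) = X"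
    using X part_unique[OF assms(1)] by (intro the_equality) auto
  then show ?thesis using X by simp
qed

lemma edge_cm:
  assumes "complete_multipartite V E P" "u \<in> V" "v \<in> V"
  shows "{u,v} \<in> E \<longleftrightarrow> (\<forall>X\<in>P. \<not> (u \<in> X \<and> v \<in> X))"
proof
  assume "{u,v} \<in> E"
  then obtain u' v' where "{u,v} = {u',v'}" "\<forall>X\<in>P. \<not> (u' \<in> X \<and> v' \<in> X)"
    using assms(1) unfolding complete_multipartite_def by blast
  then show "\<forall>X\<in>P. \<not> (u \<in> X \<and> v \<in> X)" by (auto simp: doubleton_eq_iff)
next
  assume "\<forall>X\<in>P. \<not> (u \<in> X \<and> v \<in> X)"
  then show "{u,v} \<in> E" using assms unfolding complete_multipartite_def by blast
qed

lemma color_exists: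
  assumes cm: "complete_multipartite HV HE Q" and cQ: "card Q = k" and k: "2 \<le> k" "k \<le> r"
    and ij: "i < r" "j < r" "i \<noteq> j" and fin: "finite HV"
  shows "\<exists>\<sigma>\<in>Col HV HE r. \<exists>u\<in>HV. \<exists>v\<in>HV. {u,v} \<in> HE \<and> \<sigma> u = i \<and> \<sigma> v = j"
proof -
  have pQ: "partition_on HV Q" using cm unfolding complete_multipartite_def by simp
  have finQ: "finite Q" using finite_elements[OF fin pQ] .
  have "Q \<noteq> {}" using k cQ by auto
  then obtain Q1 where Q1: "Q1 \<in> Q" by blast
  have "card (Q - {Q1}) \<ge> 1" using Q1 k cQ finQ by simp
  then have "Q - {Q1} \<noteq> {}" by (metis card.empty not_one_le_zero)
  then obtain Q2 where Q2: "Q2 \<in> Q" "Q2 \<noteq> Q1" by blast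
  have "card (Q - {Q1, Q2}) = k - 2" using Q1 Q2 cQ finQ by (simp add: card_Diff_subset)
  moreover have "card ({..<r} - {i, j}) = r - 2" using ij by (simp add: card_Diff_subset)
  ultimately have "card (Q - {Q1, Q2}) \<le> card ({..<r} - {i, j})" using k by simp
  then obtain c' where c': "c' ` (Q - {Q1, Q2}) \<subseteq> {..<r} - {i, j}" "inj_on c' (Q - {Q1, Q2})"
    using card_le_inj[of "Q - {Q1, Q2}" "{..<r} - {i, j}"] finQ by auto
  define c where "c = c'(Q1 := i, Q2 := j)"
  have cr: "c X < r" if "X \<in> Q" for X using c' that ij unfolding c_def by auto
  have cinj: "inj_on c Q"
  proof (rule inj_onI)
    fix X Y assume XY: "X \<in> Q" "Y \<in> Q" "c X = c Y"
    show "X = Y"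
    proof (cases "X \<in> {Q1,Q2} \<or> Y \<in> {Q1,Q2}")
      case True then show ?thesis using XY c' ij Q2 unfolding c_def by (auto split: if_splits)
    next
      case False then show ?thesis using XY c' unfolding c_def by (auto dest: inj_onD)
    qed
  qed
  define pt where "pt = (\<lambda>v. THE X. X \<in> Q \<and> v \<in> X)"
  have pt: "pt v \<in> Q" "v \<in> pt v" if "v \<in> HV" for v using part_the[OF pQ that] unfolding pt_def by auto
  define \<sigma> where "\<sigma> = restrict (\<lambda>v. c (pt v)) HV"
  have "\<sigma> \<in> Col HV HE r"
    unfolding Col_def
  proof (intro CollectI conjI ballI impI)
    show "\<sigma> \<in> HV \<rightarrow>\<^sub>E {..<r}" unfolding \<sigma>_def using pt cr by auto
    fix u v assume uv: "u \<in> HV" "v \<in> HV" "{u,v} \<in> HE"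
    then have "\<forall>X\<in>Q. \<not> (u \<in> X \<and> v \<in> X)" using edge_cm[OF cm] by blast
    then have "pt u \<noteq> pt v" using pt uv by blast
    then show "\<sigma> u \<noteq> \<sigma> v" using cinj pt uv unfolding \<sigma>_def by (auto dest: inj_onD)
  qed
  moreover
  obtain u where u: "u \<in> Q1" using Q1 partition_onD3[OF pQ] by (metis all_not_in_conv)
  obtain v where v: "v \<in> Q2" using Q2 partition_onD3[OF pQ] by (metis all_not_in_conv)
  have uvH: "u \<in> HV" "v \<in> HV" using u v Q1 Q2 partition_onD1[OF pQ] by auto
  have "pt u = Q1" using part_unique[OF pQ] pt uvH u Q1 by blast
  have "pt v = Q2" using part_unique[OF pQ] pt uvH v Q2 by blast
  have "\<forall>X\<in>Q. \<not> (u \<in> X \<and> v \<in> X)"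
  proof (intro ballI notI)
    fix X assume "X \<in> Q" "u \<in> X \<and> v \<in> X"
    then have "X = Q1" "X = Q2" using part_unique[OF pQ] u v Q1 Q2 by blast+
    then show False using Q2 by simp
  qed
  then have "{u,v} \<in> HE" using edge_cm[OF cm uvH] by blast
  moreover have "\<sigma> u = i" using uvH \<open>pt u = Q1\<close> Q2 unfolding \<sigma>_def c_def by simp
  moreover have "\<sigma> v = j" using uvH \<open>pt v = Q2\<close> Q2 unfolding \<sigma>_def c_def by simp
  ultimately show ?thesis using uvH by blast
qed




lemma improve:
  assumes fin: "finite HV" and cm: "complete_multipartite HV HE Q" and cQ: "card Q = k"
    and k: "2 \<le> k" "k \<le> r"
  shows "x \<in> smpx r \<Longrightarrow> (\<exists>l<r. x l = 0) \<Longrightarrow> \<exists>y\<in>smpx r. pp HV HE r y > pp HV HE r x"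
proof (induction "card {l. l < r \<and> x l = 0}" arbitrary: x rule: less_induct)
  case (less x)
  have xs: "\<And>l. l < r \<Longrightarrow> 0 \<le> x l \<and> x l \<le> 1" "\<And>l. l \<ge> r \<Longrightarrow> x l = 0" "(\<Sum>l<r. x l) = 1"
    using less.prems(1) unfolding smpx_def by auto
  obtain i where i: "i < r" "x i = 0" using less.prems(2) by blast
  obtain j where j: "j < r" "x j > 0"
  proof -
    have "\<not> (\<forall>l<r. x l \<le> 0)"
    proof
      assume "\<forall>l<r. x l \<le> 0"
      then have "(\<Sum>l<r. x l) \<le> 0" by (intro sum_nonpos) auto
      then show False using xs by simp
    qed
    then show ?thesis using that xs by force
  qed
  have ij: "i \<noteq> j" using i j by auto
  define d where "d = x j / 2"
  define y where "y = (\<lambda>l. x l + (if l = i then d else 0) - (if l = j then d else 0))"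
  have yi: "y i = d" "y j = d" using i ij unfolding y_def d_def by auto
  have yo: "\<And>l. l \<noteq> i \<Longrightarrow> l \<noteq> j \<Longrightarrow> y l = x l" unfolding y_def by auto
  have yij: "y i + y j = x j" by (simp add: yi d_def)
  have dpos: "d > 0" "d \<le> 1" using j xs(1)[of j] unfolding d_def by auto
  have ysum: "(\<Sum>l<r. y l) = 1"
  proof -
    have "(\<Sum>l<r. y l) = (\<Sum>l<r. x l) + (\<Sum>l<r. (if l = i then d else 0)) - (\<Sum>l<r. (if l = j then d else 0))"
      unfolding y_def by (simp add: sum.distrib sum_subtractf)
    also have "\<dots> = 1" using i j xs by simp
    finally show ?thesis .
  qed
  have ynn: "\<And>l. l < r \<Longrightarrow> 0 \<le> y l \<and> y l \<le> 1"
    using yi yo xs dpos by (metis less_eq_real_def)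
  have ysm: "y \<in> smpx r"
    unfolding smpx_def using ynn ysum yo xs(2) i j by auto
  define M where "M \<equiv> (\<lambda>\<sigma>. restrict (\<lambda>v. if \<sigma> v = i then j else \<sigma> v) HV)"
  have split: "pp HV HE r y = pp HV HE r x +
     (\<Sum>\<sigma>\<in>{\<sigma>\<in>Col HV HE r. M \<sigma> \<notin> Col HV HE r}. \<Prod>v\<in>HV. y (\<sigma> v))"
    unfolding M_def by (rule pp_split[OF fin i(1) j(1) ij i(2) yij yo])
  have nn: "0 \<le> (\<Prod>v\<in>HV. y (\<sigma> v))" if "\<sigma> \<in> Col HV HE r" for \<sigma>
    using that ynn unfolding Col_def by (auto intro!: prod_nonneg)
  have finS: "finite {\<sigma>\<in>Col HV HE r. M \<sigma> \<notin> Col HV HE r}" using finite_Col[OF fin] by auto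
  have ge: "pp HV HE r y \<ge> pp HV HE r x"
  proof -
    have "0 \<le> (\<Sum>\<sigma>\<in>{\<sigma>\<in>Col HV HE r. M \<sigma> \<notin> Col HV HE r}. \<Prod>v\<in>HV. y (\<sigma> v))"
      using nn by (intro sum_nonneg) auto
    then show ?thesis using split by linarith
  qed
  have zeros: "{l. l < r \<and> y l = 0} = {l. l < r \<and> x l = 0} - {i}"
  proof (rule set_eqI)
    fix l show "l \<in> {l. l < r \<and> y l = 0} \<longleftrightarrow> l \<in> {l. l < r \<and> x l = 0} - {i}"
      by (cases "l = i"; cases "l = j") (use yi yo dpos i j in auto)
  qed
  show ?case
  proof (cases "\<exists>l<r. y l = 0")
    case True
    have "card {l. l < r \<and> y l = 0} < card {l. l < r \<and> x l = 0}"
      unfolding zeros using i by (intro card_Diff1_less) auto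
    then obtain w where "w \<in> smpx r" "pp HV HE r w > pp HV HE r y"
      using less.hyps[OF _ ysm True] by blast
    then show ?thesis using ge by force
  next
    case False
    then have ypos: "\<And>l. l < r \<Longrightarrow> y l > 0" using ynn by (metis less_eq_real_def)
    obtain \<sigma> u v where s: "\<sigma> \<in> Col HV HE r" "u \<in> HV" "v \<in> HV" "{u,v} \<in> HE" "\<sigma> u = i" "\<sigma> v = j"
      using color_exists[OF cm cQ k i(1) j(1) ij fin] by blast
    have "M \<sigma> u = M \<sigma> v" using s ij unfolding M_def by simp
    then have "M \<sigma> \<notin> Col HV HE r" using s unfolding Col_def by blast
    moreover have "0 < (\<Prod>v\<in>HV. y (\<sigma> v))"
      using s(1) ypos unfolding Col_def by (auto intro!: prod_pos)
    ultimately have "0 < (\<Sum>\<sigma>\<in>{\<sigma>\<in>Col HV HE r. M \<sigma> \<notin> Col HV HE r}. \<Prod>v\<in>HV. y (\<sigma> v))"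
      using s(1) nn finS by (intro sum_pos2[where i=\<sigma>]) auto
    then show ?thesis using split ysm by force
  qed
qed




lemma pp_lip:
  assumes fin: "finite HV" and x: "x \<in> smpx r" and y: "y \<in> smpx r"
    and d: "\<And>t. t < r \<Longrightarrow> \<bar>x t - y t\<bar> \<le> e"
  shows "\<bar>pp HV HE r x - pp HV HE r y\<bar> \<le> real (card (Col HV HE r)) * real (card HV) * e"
proof -
  have xr: "\<And>t. t < r \<Longrightarrow> 0 \<le> x t \<and> x t \<le> 1" and yr: "\<And>t. t < r \<Longrightarrow> 0 \<le> y t \<and> y t \<le> 1"
    using x y unfolding smpx_def by auto
  have "\<bar>pp HV HE r x - pp HV HE r y\<bar> =
     \<bar>\<Sum>\<tau>\<in>Col HV HE r. (\<Prod>v\<in>HV. x (\<tau> v)) - (\<Prod>v\<in>HV. y (\<tau> v))\<bar>"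
    unfolding pp_def by (simp add: sum_subtractf)
  also have "\<dots> \<le> (\<Sum>\<tau>\<in>Col HV HE r. \<bar>(\<Prod>v\<in>HV. x (\<tau> v)) - (\<Prod>v\<in>HV. y (\<tau> v))\<bar>)"
    by (rule sum_abs)
  also have "\<dots> \<le> (\<Sum>\<tau>\<in>Col HV HE r. real (card HV) * e)"
  proof (rule sum_mono)
    fix \<tau> assume "\<tau> \<in> Col HV HE r"
    then have tr: "\<And>v. v \<in> HV \<Longrightarrow> \<tau> v < r" unfolding Col_def by auto
    have "\<bar>(\<Prod>v\<in>HV. x (\<tau> v)) - (\<Prod>v\<in>HV. y (\<tau> v))\<bar> \<le> (\<Sum>v\<in>HV. \<bar>x (\<tau> v) - y (\<tau> v)\<bar>)"
      by (rule prod_diff_le) (use fin xr yr tr in auto)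
    also have "\<dots> \<le> (\<Sum>v\<in>HV. e)" by (rule sum_mono) (use d tr in auto)
    finally show "\<bar>(\<Prod>v\<in>HV. x (\<tau> v)) - (\<Prod>v\<in>HV. y (\<tau> v))\<bar> \<le> real (card HV) * e" by simp
  qed
  also have "\<dots> = real (card (Col HV HE r)) * real (card HV) * e" by simp
  finally show ?thesis .
qed

lemma gap:
  assumes fin: "finite HV" and r: "2 \<le> r"
    and improve: "\<And>x. x \<in> smpx r \<Longrightarrow> (\<exists>l<r. x l = 0) \<Longrightarrow> \<exists>y\<in>smpx r. pp HV HE r y > pp HV HE r x"
  shows "\<exists>xs\<in>smpx r. (\<forall>y\<in>smpx r. pp HV HE r y \<le> pp HV HE r xs) \<and>
     (\<exists>\<delta>>0. \<exists>m>0. \<forall>x\<in>smpx r. (\<exists>l<r. x l < \<delta>) \<longrightarrow> pp HV HE r x \<le> pp HV HE r xs - m)"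
proof -
  define p where "p = pp HV HE r"
  define e0 where "e0 = (\<lambda>l::nat. if l = 0 then 1 else (0::real))"
  have e0: "e0 \<in> smpx r" using r unfolding smpx_def e0_def by auto
  have e0z: "e0 1 = 0" "1 < r" using r unfolding e0_def by auto
  obtain xs where xs: "xs \<in> smpx r" "\<forall>y\<in>smpx r. p y \<le> p xs"
    using continuous_attains_sup[OF compact_smpx _ continuous_pp, of r HV HE] e0 unfolding p_def by blast
  define Bs where "Bs = smpx r \<inter> (\<Union>l<r. {x. x l = 0})"
  have cl: "closed (\<Union>l<r. {x::nat\<Rightarrow>real. x l = 0})"
    by (intro closed_UN finite_lessThan ballI closed_Collect_eq) auto
  have cB: "compact Bs" unfolding Bs_def using compact_smpx cl by blast
  have neB: "Bs \<noteq> {}" using e0 e0z unfolding Bs_def by blast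
  obtain xb where xb: "xb \<in> Bs" "\<forall>y\<in>Bs. p y \<le> p xb"
    using continuous_attains_sup[OF cB neB continuous_pp[of Bs HV HE r]] unfolding p_def by blast
  obtain yb where yb: "yb \<in> smpx r" "p yb > p xb"
    using improve[of xb] xb(1) unfolding Bs_def p_def by blast
  define m0 where "m0 = p xs - p xb"
  have m0: "m0 > 0" using yb xs unfolding m0_def by force
  define L where "L = real (card (Col HV HE r)) * real (card HV)"
  have L: "L \<ge> 0" unfolding L_def by simp
  define \<delta> where "\<delta> = m0 / (2 * (L + 1))"
  have \<delta>: "\<delta> > 0" unfolding \<delta>_def using m0 L by simp
  have "\<forall>x\<in>smpx r. (\<exists>l<r. x l < \<delta>) \<longrightarrow> p x \<le> p xs - m0 / 2"
  proof (intro ballI impI)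
    fix x assume x: "x \<in> smpx r" and "\<exists>l<r. x l < \<delta>"
    then obtain l where l: "l < r" "x l < \<delta>" by blast
    have xr: "\<And>t. t < r \<Longrightarrow> 0 \<le> x t \<and> x t \<le> 1" "\<And>t. t \<ge> r \<Longrightarrow> x t = 0" "(\<Sum>t<r. x t) = 1"
      using x unfolding smpx_def by auto
    define j where "j = (if l = 0 then 1 else (0::nat))"
    have j: "j < r" "j \<noteq> l" unfolding j_def using r by auto
    define y where "y = (\<lambda>t. x t - (if t = l then x l else 0) + (if t = j then x l else 0))"
    have yl: "y l = 0" "y j = x j + x l" using j unfolding y_def by auto
    have yo: "\<And>t. t \<noteq> l \<Longrightarrow> t \<noteq> j \<Longrightarrow> y t = x t" unfolding y_def by auto
    have "x j + x l = (\<Sum>t\<in>{j,l}. x t)" using j by simp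
    also have "\<dots> \<le> (\<Sum>t<r. x t)" using j l xr by (intro sum_mono2) auto
    finally have xjl: "x j + x l \<le> 1" using xr by simp
    have ysum: "(\<Sum>t<r. y t) = 1"
    proof -
      have "(\<Sum>t<r. y t) = (\<Sum>t<r. x t) - (\<Sum>t<r. (if t = l then x l else 0)) + (\<Sum>t<r. (if t = j then x l else 0))"
        unfolding y_def by (simp add: sum.distrib sum_subtractf)
      also have "\<dots> = 1" using j l xr by simp
      finally show ?thesis .
    qed
    have yr: "0 \<le> y t \<and> y t \<le> 1" if "t < r" for t
    proof (cases "t = l \<or> t = j")
      case True then show ?thesis using yl xjl xr j l by auto
    next
      case False then show ?thesis using yo xr that by auto
    qed
    have ysm: "y \<in> smpx r" unfolding smpx_def using yr ysum yo xr(2) j l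
      by (auto simp: not_less) 
    have "y \<in> Bs" unfolding Bs_def using ysm yl l by blast
    then have py: "p y \<le> p xb" using xb by blast
    have dd: "\<bar>x t - y t\<bar> \<le> x l" if "t < r" for t
      using yl yo xr(1)[of l] l by (cases "t = l \<or> t = j") auto
    have "\<bar>p x - p y\<bar> \<le> L * x l" unfolding p_def L_def by (rule pp_lip[OF fin x ysm dd])
    also have "\<dots> \<le> L * \<delta>" using L l by (intro mult_left_mono) auto
    also have "\<dots> \<le> m0 / 2" unfolding \<delta>_def using m0 L by (simp add: field_simps)
    finally have "p x \<le> p y + m0 / 2" by linarith
    moreover have "p xb = p xs - m0" by (simp add: m0_def)
    ultimately show "p x \<le> p xs - m0 / 2" using py by linarith
  qed
  then show ?thesis using xs \<delta> m0 unfolding p_def by (intro bexI[of _ xs] conjI exI[of _ \<delta>] exI[of _ "m0/2"]) auto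
qed




definition homs :: "'b set \<Rightarrow> 'b set set \<Rightarrow> 'a set \<Rightarrow> 'a set set \<Rightarrow> ('b \<Rightarrow> 'a) set" where
  "homs HV HE V E = {\<phi> \<in> HV \<rightarrow>\<^sub>E V. \<forall>u\<in>HV. \<forall>v\<in>HV. {u,v} \<in> HE \<longrightarrow> {\<phi> u, \<phi> v} \<in> E}"

definition embs :: "'b set \<Rightarrow> 'b set set \<Rightarrow> 'a set \<Rightarrow> 'a set set \<Rightarrow> ('b \<Rightarrow> 'a) set" where
  "embs HV HE V E = {\<phi> \<in> homs HV HE V E. inj_on \<phi> HV}"

definition auts :: "'b set \<Rightarrow> 'b set set \<Rightarrow> ('b \<Rightarrow> 'b) set" where
  "auts HV HE = {g \<in> HV \<rightarrow>\<^sub>E HV. bij_betw g HV HV \<and> (\<forall>u\<in>HV. \<forall>v\<in>HV. {u,v} \<in> HE \<longleftrightarrow> {g u, g v} \<in> HE)}"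

definition isos :: "'b set \<Rightarrow> 'b set set \<Rightarrow> 'a set \<Rightarrow> 'a set set \<Rightarrow> ('b \<Rightarrow> 'a) set" where
  "isos HV HE U F = {f \<in> HV \<rightarrow>\<^sub>E U. bij_betw f HV U \<and> (\<forall>u\<in>HV. \<forall>v\<in>HV. {u,v} \<in> HE \<longleftrightarrow> {f u, f v} \<in> F)}"

lemma card_isos:
  assumes "graph_iso HV HE U F"
  shows "card (isos HV HE U F) = card (auts HV HE)"
proof -
  obtain f0 where f0: "bij_betw f0 HV U" "\<forall>u\<in>HV. \<forall>v\<in>HV. {u, v} \<in> HE \<longleftrightarrow> {f0 u, f0 v} \<in> F"
    using assms unfolding graph_iso_def by blast
  define T where "T = (\<lambda>g. restrict (\<lambda>v. f0 (g v)) HV)"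
  have inj0: "inj_on f0 HV" and im0: "f0 ` HV = U" using f0(1) unfolding bij_betw_def by auto
  have "bij_betw T (auts HV HE) (isos HV HE U F)"
    unfolding bij_betw_def
  proof (intro conjI)
    show "inj_on T (auts HV HE)"
    proof (rule inj_onI)
      fix g g' assume g: "g \<in> auts HV HE" "g' \<in> auts HV HE" "T g = T g'"
      show "g = g'"
      proof (rule PiE_ext)
        show "g \<in> HV \<rightarrow>\<^sub>E HV" "g' \<in> HV \<rightarrow>\<^sub>E HV" using g unfolding auts_def by auto
        fix v assume v: "v \<in> HV"
        have "T g v = T g' v" using g by simp
        then have "f0 (g v) = f0 (g' v)" using v unfolding T_def by simp
        moreover have "g v \<in> HV" "g' v \<in> HV" using g v unfolding auts_def by auto
        ultimately show "g v = g' v" using inj0 by (auto dest: inj_onD)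
      qed
    qed
    show "T ` auts HV HE = isos HV HE U F"
    proof (intro set_eqI iffI)
      fix f assume "f \<in> T ` auts HV HE"
      then obtain g where g: "g \<in> auts HV HE" "f = T g" by blast
      have gH: "g \<in> HV \<rightarrow>\<^sub>E HV" "bij_betw g HV HV"
        "\<forall>u\<in>HV. \<forall>v\<in>HV. {u,v} \<in> HE \<longleftrightarrow> {g u, g v} \<in> HE" using g(1) unfolding auts_def by auto
      have "bij_betw (f0 \<circ> g) HV U" using bij_betw_trans[OF gH(2) f0(1)] .
      then have b: "bij_betw f HV U" unfolding g(2) T_def by (rule bij_betw_cong[THEN iffD1, rotated]) auto
      have "f \<in> HV \<rightarrow>\<^sub>E U" unfolding g(2) T_def using gH(1) im0 by auto
      moreover have "\<forall>u\<in>HV. \<forall>v\<in>HV. {u,v} \<in> HE \<longleftrightarrow> {f u, f v} \<in> F"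
      proof (intro ballI)
        fix u v assume uv: "u \<in> HV" "v \<in> HV"
        then have "g u \<in> HV" "g v \<in> HV" using gH(1) by auto
        then show "{u,v} \<in> HE \<longleftrightarrow> {f u, f v} \<in> F" using uv gH(3) f0(2) unfolding g(2) T_def by simp
      qed
      ultimately show "f \<in> isos HV HE U F" using b unfolding isos_def by blast
    next
      fix f assume f: "f \<in> isos HV HE U F"
      have fH: "f \<in> HV \<rightarrow>\<^sub>E U" "bij_betw f HV U" "\<forall>u\<in>HV. \<forall>v\<in>HV. {u,v} \<in> HE \<longleftrightarrow> {f u, f v} \<in> F"
        using f unfolding isos_def by auto
      define g where "g = restrict (\<lambda>v. inv_into HV f0 (f v)) HV"
      have fU: "\<And>v. v \<in> HV \<Longrightarrow> f v \<in> U" using fH(1) by auto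
      have ginH: "\<And>v. v \<in> HV \<Longrightarrow> g v \<in> HV" unfolding g_def using fU im0 by (auto intro: inv_into_into)
      have f0g: "\<And>v. v \<in> HV \<Longrightarrow> f0 (g v) = f v" unfolding g_def using fU im0 by (auto intro: f_inv_into_f)
      have "bij_betw (inv_into HV f0 \<circ> f) HV HV"
        using bij_betw_trans[OF fH(2) bij_betw_inv_into[OF f0(1)]] .
      then have gb: "bij_betw g HV HV" unfolding g_def by (rule bij_betw_cong[THEN iffD1, rotated]) auto
      have gc: "\<forall>u\<in>HV. \<forall>v\<in>HV. {u,v} \<in> HE \<longleftrightarrow> {g u, g v} \<in> HE"
      proof (intro ballI)
        fix u v assume uv: "u \<in> HV" "v \<in> HV"
        have "{g u, g v} \<in> HE \<longleftrightarrow> {f0 (g u), f0 (g v)} \<in> F" using f0(2) ginH uv by blast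
        also have "\<dots> \<longleftrightarrow> {f u, f v} \<in> F" using f0g uv by simp
        also have "\<dots> \<longleftrightarrow> {u,v} \<in> HE" using fH(3) uv by blast
        finally show "{u,v} \<in> HE \<longleftrightarrow> {g u, g v} \<in> HE" by simp
      qed
      have "g \<in> HV \<rightarrow>\<^sub>E HV" unfolding g_def using ginH[unfolded g_def] by auto
      then have ga: "g \<in> auts HV HE" unfolding auts_def using gb gc by blast
      have "T g = f"
      proof
        fix v show "T g v = f v"
          using f0g fH(1) unfolding T_def by (cases "v \<in> HV") (auto simp: PiE_iff extensional_def)
      qed
      then show "f \<in> T ` auts HV HE" using ga by blast
    qed
  qed
  then show ?thesis by (simp add: bij_betw_same_card)
qed




lemma fiber_embs:
  fixes HV :: "'b set" and HE :: "'b set set" and V :: "'a set"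
  assumes sg: "sgraph V E" and c: "U \<subseteq> V" "F \<subseteq> E" "\<forall>e\<in>F. e \<subseteq> U"
  defines "\<Phi> \<equiv> (\<lambda>\<phi>. (\<phi> ` HV, {{\<phi> u, \<phi> v} | u v. u \<in> HV \<and> v \<in> HV \<and> {u,v} \<in> HE}))"
  shows "{\<phi> \<in> embs HV HE V E. \<Phi> \<phi> = (U, F)} = isos HV HE U F"
proof (intro set_eqI iffI)
  fix \<phi> assume a: "\<phi> \<in> {\<phi> \<in> embs HV HE V E. \<Phi> \<phi> = (U, F)}"
  then have ph: "\<phi> \<in> HV \<rightarrow>\<^sub>E V" "inj_on \<phi> HV" and U: "\<phi> ` HV = U"
    and Fe: "F = {{\<phi> u, \<phi> v} | u v. u \<in> HV \<and> v \<in> HV \<and> {u,v} \<in> HE}"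
    unfolding embs_def homs_def \<Phi>_def by auto
  have "\<phi> \<in> HV \<rightarrow>\<^sub>E U" using ph(1) U by auto
  moreover have "bij_betw \<phi> HV U" using ph(2) U unfolding bij_betw_def by simp
  moreover have "\<forall>u\<in>HV. \<forall>v\<in>HV. {u,v} \<in> HE \<longleftrightarrow> {\<phi> u, \<phi> v} \<in> F"
  proof (intro ballI iffI)
    fix u v assume "u \<in> HV" "v \<in> HV" "{u,v} \<in> HE"
    then show "{\<phi> u, \<phi> v} \<in> F" unfolding Fe by blast
  next
    fix u v assume uv: "u \<in> HV" "v \<in> HV" "{\<phi> u, \<phi> v} \<in> F"
    then obtain u' v' where w: "{\<phi> u, \<phi> v} = {\<phi> u', \<phi> v'}" "u' \<in> HV" "v' \<in> HV" "{u',v'} \<in> HE"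
      unfolding Fe by blast
    then have "(\<phi> u = \<phi> u' \<and> \<phi> v = \<phi> v') \<or> (\<phi> u = \<phi> v' \<and> \<phi> v = \<phi> u')"
      by (auto simp: doubleton_eq_iff)
    then have "(u = u' \<and> v = v') \<or> (u = v' \<and> v = u')"
      using ph(2) uv w by (auto dest: inj_onD)
    then show "{u,v} \<in> HE" using w by (auto simp: insert_commute)
  qed
  ultimately show "\<phi> \<in> isos HV HE U F" unfolding isos_def by blast
next
  fix f assume "f \<in> isos HV HE U F"
  then have f: "f \<in> HV \<rightarrow>\<^sub>E U" "bij_betw f HV U" "\<forall>u\<in>HV. \<forall>v\<in>HV. {u,v} \<in> HE \<longleftrightarrow> {f u, f v} \<in> F"
    unfolding isos_def by auto
  have fV: "f \<in> HV \<rightarrow>\<^sub>E V" using f(1) c(1) by auto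
  have inj: "inj_on f HV" and im: "f ` HV = U" using f(2) unfolding bij_betw_def by auto
  have "f \<in> homs HV HE V E" unfolding homs_def using fV f(3) c(2) by blast
  then have "f \<in> embs HV HE V E" unfolding embs_def using inj by blast
  moreover have "{{f u, f v} | u v. u \<in> HV \<and> v \<in> HV \<and> {u,v} \<in> HE} = F"
  proof (intro set_eqI iffI)
    fix e assume "e \<in> {{f u, f v} | u v. u \<in> HV \<and> v \<in> HV \<and> {u,v} \<in> HE}"
    then show "e \<in> F" using f(3) by blast
  next
    fix e assume e: "e \<in> F"
    then have "card e = 2" "e \<subseteq> U" using sg c unfolding sgraph_def by auto
    then obtain a b where ab: "e = {a,b}" "a \<in> U" "b \<in> U" by (auto simp: card_2_iff)
    then obtain u v where uv: "u \<in> HV" "v \<in> HV" "a = f u" "b = f v" using im by blast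
    then have "{u,v} \<in> HE" using f(3) e ab by simp
    then show "e \<in> {{f u, f v} | u v. u \<in> HV \<and> v \<in> HV \<and> {u,v} \<in> HE}" using ab uv by blast
  qed
  ultimately show "f \<in> {\<phi> \<in> embs HV HE V E. \<Phi> \<phi> = (U, F)}" using im unfolding \<Phi>_def by simp
qed

lemma card_embs:
  fixes HV :: "'b set" and HE :: "'b set set" and V :: "'a set" and E :: "'a set set"
  assumes sg: "sgraph V E" and fin: "finite HV"
  shows "card (embs HV HE V E) = card (auts HV HE) * count_copies HV HE V E"
proof -
  define \<Phi> where "\<Phi> \<equiv> (\<lambda>\<phi>::'b\<Rightarrow>'a. (\<phi> ` HV, {{\<phi> u, \<phi> v} | u v. u \<in> HV \<and> v \<in> HV \<and> {u,v} \<in> HE}))"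
  define Cp where "Cp = {(U, F). U \<subseteq> V \<and> F \<subseteq> E \<and> (\<forall>e\<in>F. e \<subseteq> U) \<and> graph_iso HV HE U F}"
  have finV: "finite V" using sg unfolding sgraph_def by simp
  have finE: "finite E" using sg finV unfolding sgraph_def by (meson PowI finite_Pow_iff finite_subset subsetI)
  have finCp: "finite Cp" unfolding Cp_def
    by (rule finite_subset[of _ "Pow V \<times> Pow E"]) (use finV finE in auto)
  have finEm: "finite (embs HV HE V E)" unfolding embs_def homs_def
    by (rule finite_subset[of _ "HV \<rightarrow>\<^sub>E V"]) (use fin finV in \<open>auto intro: finite_PiE\<close>)
  have sub: "\<Phi> ` embs HV HE V E \<subseteq> Cp"
  proof
    fix c assume "c \<in> \<Phi> ` embs HV HE V E"
    then obtain \<phi> where ph: "\<phi> \<in> embs HV HE V E" "c = \<Phi> \<phi>" by blast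
    obtain U F where UF: "c = (U, F)" by (cases c)
    have h: "\<phi> \<in> HV \<rightarrow>\<^sub>E V" "\<forall>u\<in>HV. \<forall>v\<in>HV. {u,v} \<in> HE \<longrightarrow> {\<phi> u, \<phi> v} \<in> E"
      using ph(1) unfolding embs_def homs_def by auto
    have U: "U = \<phi> ` HV" and F: "F = {{\<phi> u, \<phi> v} | u v. u \<in> HV \<and> v \<in> HV \<and> {u,v} \<in> HE}"
      using ph(2) UF unfolding \<Phi>_def by auto
    have UV: "U \<subseteq> V" "F \<subseteq> E" "\<forall>e\<in>F. e \<subseteq> U" using h U F by auto
    have "\<phi> \<in> {\<phi> \<in> embs HV HE V E. \<Phi> \<phi> = (U, F)}" using ph UF by simp
    then have "\<phi> \<in> isos HV HE U F" using fiber_embs[OF sg UV, of HV HE] unfolding \<Phi>_def by blast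
    then have "graph_iso HV HE U F" unfolding isos_def graph_iso_def by blast
    then show "c \<in> Cp" using UF UV unfolding Cp_def by blast
  qed
  have "card (embs HV HE V E) = (\<Sum>c\<in>Cp. card {\<phi> \<in> embs HV HE V E. \<Phi> \<phi> = c})"
    using sum.group[OF finEm finCp sub, of "\<lambda>_. 1::nat"] by simp
  also have "\<dots> = (\<Sum>c\<in>Cp. card (auts HV HE))"
  proof (rule sum.cong[OF refl])
    fix c assume "c \<in> Cp"
    then obtain U F where UF: "c = (U, F)" "U \<subseteq> V" "F \<subseteq> E" "\<forall>e\<in>F. e \<subseteq> U" "graph_iso HV HE U F"
      unfolding Cp_def by blast
    have "{\<phi> \<in> embs HV HE V E. \<Phi> \<phi> = c} = isos HV HE U F"
      using fiber_embs[OF sg UF(2-4), of HV HE] UF(1) unfolding \<Phi>_def by simp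
    then show "card {\<phi> \<in> embs HV HE V E. \<Phi> \<phi> = c} = card (auts HV HE)"
      using card_isos[OF UF(5)] by simp
  qed
  also have "\<dots> = card (auts HV HE) * count_copies HV HE V E"
    unfolding count_copies_def Cp_def by simp
  finally show ?thesis .
qed




definition colgraph :: "'a set \<Rightarrow> ('a \<Rightarrow> nat) \<Rightarrow> 'a set set" where
  "colgraph V \<pi> = {{u,v} | u v. u \<in> V \<and> v \<in> V \<and> \<pi> u \<noteq> \<pi> v}"

lemma colgraph_mem:
  assumes "a \<in> V" "b \<in> V"
  shows "{a,b} \<in> colgraph V \<pi> \<longleftrightarrow> \<pi> a \<noteq> \<pi> b"
proof
  assume "{a,b} \<in> colgraph V \<pi>"
  then obtain u v where "{a,b} = {u,v}" "\<pi> u \<noteq> \<pi> v" unfolding colgraph_def by blast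
  then show "\<pi> a \<noteq> \<pi> b" by (auto simp: doubleton_eq_iff)
next
  assume "\<pi> a \<noteq> \<pi> b" then show "{a,b} \<in> colgraph V \<pi>" using assms unfolding colgraph_def by blast
qed

lemma card_homs_col:
  assumes finH: "finite HV" and finV: "finite V" and pr: "\<And>w. w \<in> V \<Longrightarrow> \<pi> w < r"
  shows "card (homs HV HE V (colgraph V \<pi>)) =
    (\<Sum>\<tau>\<in>Col HV HE r. \<Prod>v\<in>HV. card {w\<in>V. \<pi> w = \<tau> v})"
proof -
  define P where "P = (\<lambda>\<tau>. PiE HV (\<lambda>v. {w\<in>V. \<pi> w = \<tau> v}))"
  have eq: "homs HV HE V (colgraph V \<pi>) = (\<Union>\<tau>\<in>Col HV HE r. P \<tau>)"
  proof (intro set_eqI iffI)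
    fix \<phi> assume a: "\<phi> \<in> homs HV HE V (colgraph V \<pi>)"
    then have ph: "\<phi> \<in> HV \<rightarrow>\<^sub>E V" "\<forall>u\<in>HV. \<forall>v\<in>HV. {u,v} \<in> HE \<longrightarrow> {\<phi> u, \<phi> v} \<in> colgraph V \<pi>"
      unfolding homs_def by auto
    define \<tau> where "\<tau> = restrict (\<lambda>v. \<pi> (\<phi> v)) HV"
    have "\<tau> \<in> Col HV HE r" unfolding Col_def
    proof (intro CollectI conjI ballI impI)
      show "\<tau> \<in> HV \<rightarrow>\<^sub>E {..<r}" unfolding \<tau>_def using ph(1) pr by auto
      fix u v assume uv: "u \<in> HV" "v \<in> HV" "{u,v} \<in> HE"
      then have "{\<phi> u, \<phi> v} \<in> colgraph V \<pi>" using ph(2) by blast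
      then have "\<pi> (\<phi> u) \<noteq> \<pi> (\<phi> v)" using colgraph_mem ph(1) uv by (metis PiE_mem)
      then show "\<tau> u \<noteq> \<tau> v" using uv unfolding \<tau>_def by simp
    qed
    moreover have "\<phi> \<in> P \<tau>" unfolding P_def \<tau>_def using ph(1) by (auto simp: PiE_iff)
    ultimately show "\<phi> \<in> (\<Union>\<tau>\<in>Col HV HE r. P \<tau>)" by blast
  next
    fix \<phi> assume "\<phi> \<in> (\<Union>\<tau>\<in>Col HV HE r. P \<tau>)"
    then obtain \<tau> where t: "\<tau> \<in> Col HV HE r" "\<phi> \<in> P \<tau>" by blast
    then have ph: "\<phi> \<in> HV \<rightarrow>\<^sub>E V" "\<And>v. v \<in> HV \<Longrightarrow> \<pi> (\<phi> v) = \<tau> v" unfolding P_def by (auto simp: PiE_iff)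
    have "{\<phi> u, \<phi> v} \<in> colgraph V \<pi>" if uv: "u \<in> HV" "v \<in> HV" "{u,v} \<in> HE" for u v
    proof -
      have "\<tau> u \<noteq> \<tau> v" using t(1) uv unfolding Col_def by blast
      then show ?thesis using colgraph_mem ph uv by (metis PiE_mem)
    qed
    then show "\<phi> \<in> homs HV HE V (colgraph V \<pi>)" unfolding homs_def using ph(1) by blast
  qed
  have "card (\<Union>\<tau>\<in>Col HV HE r. P \<tau>) = (\<Sum>\<tau>\<in>Col HV HE r. card (P \<tau>))"
  proof (rule card_UN_disjoint)
    show "finite (Col HV HE r)" using finite_Col[OF finH] .
    show "\<forall>\<tau>\<in>Col HV HE r. finite (P \<tau>)" unfolding P_def using finH finV by (auto intro!: finite_PiE)
    show "\<forall>\<tau>\<in>Col HV HE r. \<forall>\<tau>'\<in>Col HV HE r. \<tau> \<noteq> \<tau>' \<longrightarrow> P \<tau> \<inter> P \<tau>' = {}"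
    proof (intro ballI impI)
      fix \<tau> \<tau>' assume t: "\<tau> \<in> Col HV HE r" "\<tau>' \<in> Col HV HE r" "\<tau> \<noteq> \<tau>'"
      show "P \<tau> \<inter> P \<tau>' = {}"
      proof (rule ccontr)
        assume "P \<tau> \<inter> P \<tau>' \<noteq> {}"
        then obtain \<phi> where "\<phi> \<in> P \<tau>" "\<phi> \<in> P \<tau>'" by blast
        then have "\<And>v. v \<in> HV \<Longrightarrow> \<tau> v = \<tau>' v" unfolding P_def by (auto simp: PiE_iff)
        moreover have "\<tau> \<in> HV \<rightarrow>\<^sub>E {..<r}" "\<tau>' \<in> HV \<rightarrow>\<^sub>E {..<r}" using t unfolding Col_def by auto
        ultimately have "\<tau> = \<tau>'" by (intro PiE_ext) auto
        then show False using t by simp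
      qed
    qed
  qed
  also have "\<dots> = (\<Sum>\<tau>\<in>Col HV HE r. \<Prod>v\<in>HV. card {w\<in>V. \<pi> w = \<tau> v})"
    unfolding P_def using finH by (simp add: card_PiE)
  finally show ?thesis using eq by simp
qed

lemma real_card_homs_col:
  assumes finH: "finite HV" and finV: "finite V" and pr: "\<And>w. w \<in> V \<Longrightarrow> \<pi> w < r"
    and n: "card V = n" "n > 0"
  shows "real (card (homs HV HE V (colgraph V \<pi>))) =
    real n ^ card HV * pp HV HE r (\<lambda>t. real (card {w\<in>V. \<pi> w = t}) / real n)"
proof -
  have "real (card (homs HV HE V (colgraph V \<pi>))) =
     (\<Sum>\<tau>\<in>Col HV HE r. \<Prod>v\<in>HV. real (card {w\<in>V. \<pi> w = \<tau> v}))"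
    using card_homs_col[OF finH finV pr] by simp
  also have "\<dots> = (\<Sum>\<tau>\<in>Col HV HE r. real n ^ card HV * (\<Prod>v\<in>HV. real (card {w\<in>V. \<pi> w = \<tau> v}) / real n))"
  proof (rule sum.cong[OF refl])
    fix \<tau>
    have "(\<Prod>v\<in>HV. real (card {w\<in>V. \<pi> w = \<tau> v})) = (\<Prod>v\<in>HV. real n * (real (card {w\<in>V. \<pi> w = \<tau> v}) / real n))"
      using n by simp
    also have "\<dots> = (\<Prod>v\<in>HV. real n) * (\<Prod>v\<in>HV. real (card {w\<in>V. \<pi> w = \<tau> v}) / real n)"
      by (rule prod.distrib)
    also have "\<dots> = real n ^ card HV * (\<Prod>v\<in>HV. real (card {w\<in>V. \<pi> w = \<tau> v}) / real n)"
      by simp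
    finally show "(\<Prod>v\<in>HV. real (card {w\<in>V. \<pi> w = \<tau> v})) = real n ^ card HV * (\<Prod>v\<in>HV. real (card {w\<in>V. \<pi> w = \<tau> v}) / real n)" .
  qed
  also have "\<dots> = real n ^ card HV * pp HV HE r (\<lambda>t. real (card {w\<in>V. \<pi> w = t}) / real n)"
    unfolding pp_def by (simp add: sum_distrib_left)
  finally show ?thesis .
qed

lemma card_fix_eq:
  assumes finH: "finite HV" and finV: "finite V" and uv: "u \<in> HV" "v \<in> HV" "u \<noteq> v"
  shows "card {\<phi> \<in> HV \<rightarrow>\<^sub>E V. \<phi> u = \<phi> v} \<le> card V ^ (card HV - 1)"
proof -
  have "inj_on (\<lambda>\<phi>. restrict \<phi> (HV - {v})) {\<phi> \<in> HV \<rightarrow>\<^sub>E V. \<phi> u = \<phi> v}"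
  proof (rule inj_onI)
    fix \<phi> \<psi> assume a: "\<phi> \<in> {\<phi> \<in> HV \<rightarrow>\<^sub>E V. \<phi> u = \<phi> v}" "\<psi> \<in> {\<phi> \<in> HV \<rightarrow>\<^sub>E V. \<phi> u = \<phi> v}"
      "restrict \<phi> (HV - {v}) = restrict \<psi> (HV - {v})"
    show "\<phi> = \<psi>"
    proof (rule PiE_ext)
      show "\<phi> \<in> HV \<rightarrow>\<^sub>E V" "\<psi> \<in> HV \<rightarrow>\<^sub>E V" using a by auto
      fix w assume w: "w \<in> HV"
      have e: "\<phi> x = \<psi> x" if "x \<in> HV - {v}" for x using a(3) that by (metis restrict_apply')
      show "\<phi> w = \<psi> w"
      proof (cases "w = v")
        case True
        then have "\<phi> w = \<phi> u" "\<psi> w = \<psi> u" using a by auto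
        then show ?thesis using e[of u] uv by simp
      next
        case False then show ?thesis using e w by simp
      qed
    qed
  qed
  moreover have "(\<lambda>\<phi>. restrict \<phi> (HV - {v})) ` {\<phi> \<in> HV \<rightarrow>\<^sub>E V. \<phi> u = \<phi> v} \<subseteq> (HV - {v}) \<rightarrow>\<^sub>E V"
  proof (rule image_subsetI)
    fix \<phi> assume "\<phi> \<in> {\<phi> \<in> HV \<rightarrow>\<^sub>E V. \<phi> u = \<phi> v}"
    then have "\<And>x. x \<in> HV \<Longrightarrow> \<phi> x \<in> V" by auto
    then show "restrict \<phi> (HV - {v}) \<in> (HV - {v}) \<rightarrow>\<^sub>E V" by auto
  qed
  moreover have "finite ((HV - {v}) \<rightarrow>\<^sub>E V)" using finH finV by (auto intro: finite_PiE)
  ultimately have "card {\<phi> \<in> HV \<rightarrow>\<^sub>E V. \<phi> u = \<phi> v} \<le> card ((HV - {v}) \<rightarrow>\<^sub>E V)"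
    by (intro card_inj_on_le) auto
  also have "\<dots> = card V ^ (card HV - 1)" using finH uv by (simp add: card_PiE)
  finally show ?thesis .
qed

lemma homs_embs:
  assumes finH: "finite HV" and finV: "finite V"
  shows "card (homs HV HE V E) \<le> card (embs HV HE V E) + card HV ^ 2 * card V ^ (card HV - 1)"
proof -
  have finh: "finite (homs HV HE V E)" unfolding homs_def
    by (rule finite_subset[of _ "HV \<rightarrow>\<^sub>E V"]) (use finH finV in \<open>auto intro: finite_PiE\<close>)
  have sub: "embs HV HE V E \<subseteq> homs HV HE V E" unfolding embs_def by auto
  define A where "A = (\<lambda>p. {\<phi> \<in> HV \<rightarrow>\<^sub>E V. \<phi> (fst p) = \<phi> (snd p)})"
  define I where "I = {p \<in> HV \<times> HV. fst p \<noteq> snd p}"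
  have hsub: "homs HV HE V E - embs HV HE V E \<subseteq> (\<Union>p\<in>I. A p)"
  proof
    fix \<phi> assume "\<phi> \<in> homs HV HE V E - embs HV HE V E"
    then have "\<phi> \<in> HV \<rightarrow>\<^sub>E V" "\<not> inj_on \<phi> HV" unfolding embs_def homs_def by auto
    then obtain u v where "u \<in> HV" "v \<in> HV" "u \<noteq> v" "\<phi> u = \<phi> v" unfolding inj_on_def by blast
    then show "\<phi> \<in> (\<Union>p\<in>I. A p)" using \<open>\<phi> \<in> HV \<rightarrow>\<^sub>E V\<close> unfolding I_def A_def by force
  qed
  have "card (homs HV HE V E - embs HV HE V E) \<le> card (\<Union>p\<in>I. A p)"
  proof (rule card_mono[OF _ hsub])
    have "(\<Union>p\<in>I. A p) \<subseteq> HV \<rightarrow>\<^sub>E V" unfolding A_def by auto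
    moreover have "finite (HV \<rightarrow>\<^sub>E V)" using finH finV by (auto intro: finite_PiE)
    ultimately show "finite (\<Union>p\<in>I. A p)" by (rule finite_subset)
  qed
  also have "\<dots> \<le> (\<Sum>p\<in>I. card (A p))" by (rule card_UN_le) (use finH in \<open>simp add: I_def\<close>)
  also have "\<dots> \<le> (\<Sum>p\<in>I. card V ^ (card HV - 1))"
    by (rule sum_mono) (use card_fix_eq[OF finH finV] in \<open>auto simp: I_def A_def\<close>)
  also have "\<dots> = card I * card V ^ (card HV - 1)" by simp
  also have "\<dots> \<le> card HV ^ 2 * card V ^ (card HV - 1)"
  proof -
    have "card I \<le> card (HV \<times> HV)" unfolding I_def using finH by (intro card_mono) auto
    then have "card I \<le> card HV ^ 2" by (simp add: card_cartesian_product power2_eq_square)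
    then show ?thesis by simp
  qed
  finally have "card (homs HV HE V E - embs HV HE V E) \<le> card HV ^ 2 * card V ^ (card HV - 1)" .
  moreover have "card (homs HV HE V E) = card (embs HV HE V E) + card (homs HV HE V E - embs HV HE V E)"
    using sub finh by (metis card_Diff_subset card_mono diff_add_inverse le_add_diff_inverse finite_subset)
  ultimately show ?thesis by simp
qed

lemma embs_le_homs:
  assumes finH: "finite HV" and finV: "finite V"
  shows "card (embs HV HE V E) \<le> card (homs HV HE V E)"
proof -
  have finh: "finite (homs HV HE V E)" unfolding homs_def
    by (rule finite_subset[of _ "HV \<rightarrow>\<^sub>E V"]) (use finH finV in \<open>auto intro: finite_PiE\<close>)
  then show ?thesis unfolding embs_def by (intro card_mono) auto
qed




lemma xof_smpx:
  assumes finV: "finite V" and pr: "\<And>w. w \<in> V \<Longrightarrow> \<pi> w < r" and n: "card V = n" "n > 0"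
  shows "(\<lambda>t. real (card {w\<in>V. \<pi> w = t}) / real n) \<in> smpx r"
proof -
  have s: "(\<Sum>t<r. card {w\<in>V. \<pi> w = t}) = card V"
    using sum.group[OF finV finite_lessThan, where g=\<pi> and h="\<lambda>_. 1::nat"] pr by auto
  have "(\<Sum>t<r. real (card {w\<in>V. \<pi> w = t}) / real n) = real (\<Sum>t<r. card {w\<in>V. \<pi> w = t}) / real n"
    by (simp add: sum_divide_distrib)
  also have "\<dots> = 1" using s n by simp
  finally have 1: "(\<Sum>t<r. real (card {w\<in>V. \<pi> w = t}) / real n) = 1" .
  have le: "card {w\<in>V. \<pi> w = t} \<le> n" for t
  proof -
    have "card {w\<in>V. \<pi> w = t} \<le> card V" by (rule card_mono[OF finV]) auto
    then show ?thesis using n by simp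
  qed
  have z: "{w\<in>V. \<pi> w = t} = {}" if "t \<ge> r" for t using pr that by fastforce
  have z0: "card {w\<in>V. \<pi> w = t} = 0" if "t \<ge> r" for t by (simp only: z[OF that] card.empty)
  have "\<forall>l\<ge>r. real (card {w\<in>V. \<pi> w = l}) / real n = 0" using z0 by simp
  moreover have "\<forall>l<r. 0 \<le> real (card {w\<in>V. \<pi> w = l}) / real n \<and> real (card {w\<in>V. \<pi> w = l}) / real n \<le> 1"
    using le n by simp
  ultimately show ?thesis unfolding smpx_def using 1 by blast
qed

lemma colgraph_sgraph:
  assumes "finite V" shows "sgraph V (colgraph V \<pi>)"
  unfolding sgraph_def colgraph_def using assms by (auto simp: card_2_iff)

lemma colgraph_clique_free:
  assumes finV: "finite V" and pr: "\<And>w. w \<in> V \<Longrightarrow> \<pi> w < r"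
  shows "clique_free V (colgraph V \<pi>) (r + 1)"
  unfolding clique_free_def
proof
  assume "\<exists>S\<subseteq>V. card S = r + 1 \<and> (\<forall>u\<in>S. \<forall>v\<in>S. u \<noteq> v \<longrightarrow> {u, v} \<in> colgraph V \<pi>)"
  then obtain S where S: "S \<subseteq> V" "card S = r + 1" "\<forall>u\<in>S. \<forall>v\<in>S. u \<noteq> v \<longrightarrow> {u, v} \<in> colgraph V \<pi>" by blast
  have "inj_on \<pi> S"
  proof (rule inj_onI)
    fix u v assume "u \<in> S" "v \<in> S" "\<pi> u = \<pi> v"
    then show "u = v" using S colgraph_mem[of u V v \<pi>] by blast
  qed
  moreover have "\<pi> ` S \<subseteq> {..<r}" using S pr by auto
  ultimately have "card S \<le> card {..<r}" by (intro card_inj_on_le) auto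
  then show False using S by simp
qed




lemma cm_card_le:
  assumes cm: "complete_multipartite V E Ps" and cf: "clique_free V E (r + 1)" and finV: "finite V"
  shows "card Ps \<le> r"
proof (rule ccontr)
  assume "\<not> card Ps \<le> r"
  then have big: "card Ps \<ge> r + 1" by simp
  have pP: "partition_on V Ps" using cm unfolding complete_multipartite_def by simp
  have finP: "finite Ps" using finite_elements[OF finV pP] .
  obtain Ps' where Ps': "Ps' \<subseteq> Ps" "card Ps' = r + 1" "finite Ps'" using obtain_subset_with_card_n[OF big] .
  define rep where "rep = (\<lambda>X::'a set. SOME w. w \<in> X)"
  have rep: "rep X \<in> X" if "X \<in> Ps" for X
  proof -
    have "X \<noteq> {}" using that partition_onD3[OF pP] by blast
    then obtain w where "w \<in> X" by blast
    then show ?thesis unfolding rep_def by (rule someI)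
  qed
  have repV: "rep X \<in> V" if "X \<in> Ps" for X using rep[OF that] that partition_onD1[OF pP] by blast
  have injr: "inj_on rep Ps'"
  proof (rule inj_onI)
    fix X Y assume "X \<in> Ps'" "Y \<in> Ps'" "rep X = rep Y"
    then have XY: "X \<in> Ps" "Y \<in> Ps" using Ps'(1) by auto
    have "rep X \<in> X" "rep Y \<in> Y" using rep XY by auto
    then have "rep X \<in> X" "rep X \<in> Y" using \<open>rep X = rep Y\<close> by auto
    note XY this
    then show "X = Y" using part_unique[OF pP, of X Y "rep X"] by simp
  qed
  define S where "S = rep ` Ps'"
  have "S \<subseteq> V" unfolding S_def using repV Ps'(1) by auto
  moreover have "card S = r + 1" unfolding S_def using card_image[OF injr] Ps' by simp
  moreover have "\<forall>u\<in>S. \<forall>v\<in>S. u \<noteq> v \<longrightarrow> {u, v} \<in> E"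
  proof (intro ballI impI)
    fix u v assume uv: "u \<in> S" "v \<in> S" "u \<noteq> v"
    then obtain X Y where XY: "X \<in> Ps'" "Y \<in> Ps'" "u = rep X" "v = rep Y" unfolding S_def by blast
    then have "X \<noteq> Y" using uv by auto
    have "\<forall>Z\<in>Ps. \<not> (u \<in> Z \<and> v \<in> Z)"
    proof (intro ballI notI)
      fix Z assume "Z \<in> Ps" "u \<in> Z \<and> v \<in> Z"
      moreover have "X \<in> Ps" "Y \<in> Ps" using XY Ps'(1) by auto
      moreover have "u \<in> X" "v \<in> Y" using rep XY calculation by auto
      ultimately have "Z = X" "Z = Y" using part_unique[OF pP, of Z X u] part_unique[OF pP, of Z Y v] by auto
      then show False using \<open>X \<noteq> Y\<close> by simp
    qed
    moreover have "u \<in> V" "v \<in> V" using repV XY Ps'(1) by auto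
    ultimately show "{u,v} \<in> E" using edge_cm[OF cm] by blast
  qed
  ultimately have "\<exists>S\<subseteq>V. card S = r + 1 \<and> (\<forall>u\<in>S. \<forall>v\<in>S. u \<noteq> v \<longrightarrow> {u, v} \<in> E)"
    by (intro exI[of _ S] conjI)
  then show False using cf unfolding clique_free_def by (rule notE[rotated])
qed




lemma cm_colgraph:
  assumes cm: "complete_multipartite V E Ps" and finV: "finite V"
  shows "\<exists>\<pi>. (\<forall>w\<in>V. \<pi> w < card Ps) \<and> E = colgraph V \<pi> \<and>
     (\<forall>X\<in>Ps. \<exists>l<card Ps. {w\<in>V. \<pi> w = l} = X)"
proof -
  have pP: "partition_on V Ps" using cm unfolding complete_multipartite_def by simp
  have finP: "finite Ps" using finite_elements[OF finV pP] .
  obtain e where e: "bij_betw e {0..<card Ps} Ps" using ex_bij_betw_nat_finite[OF finP] by blast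
  define pt where "pt = (\<lambda>w. THE X. X \<in> Ps \<and> w \<in> X)"
  have pt: "pt w \<in> Ps" "w \<in> pt w" if "w \<in> V" for w using part_the[OF pP that] unfolding pt_def by auto
  define \<pi> where "\<pi> = (\<lambda>w. inv_into {0..<card Ps} e (pt w))"
  have bi: "bij_betw (inv_into {0..<card Ps} e) Ps {0..<card Ps}" by (rule bij_betw_inv_into[OF e])
  have ie: "inv_into {0..<card Ps} e X < card Ps" if "X \<in> Ps" for X
    using bij_betwE[OF bi] that by auto
  have ie_inj: "inv_into {0..<card Ps} e X = inv_into {0..<card Ps} e Y \<longleftrightarrow> X = Y" if "X \<in> Ps" "Y \<in> Ps" for X Y
    using inj_on_eq_iff[OF bij_betw_imp_inj_on[OF bi] that] .
  have pr: "\<forall>w\<in>V. \<pi> w < card Ps" unfolding \<pi>_def using pt ie by auto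
  have same: "(\<forall>X\<in>Ps. \<not> (u \<in> X \<and> v \<in> X)) \<longleftrightarrow> \<pi> u \<noteq> \<pi> v" if "u \<in> V" "v \<in> V" for u v
  proof -
    have "(\<forall>X\<in>Ps. \<not> (u \<in> X \<and> v \<in> X)) \<longleftrightarrow> pt u \<noteq> pt v"
    proof
      assume a: "\<forall>X\<in>Ps. \<not> (u \<in> X \<and> v \<in> X)"
      show "pt u \<noteq> pt v"
      proof
        assume e: "pt u = pt v"
        have "pt u \<in> Ps" "u \<in> pt u" "v \<in> pt v" using pt that by auto
        then show False using a e by auto
      qed
    next
      assume a: "pt u \<noteq> pt v"
      show "\<forall>X\<in>Ps. \<not> (u \<in> X \<and> v \<in> X)"
      proof (intro ballI notI)
        fix X assume "X \<in> Ps" "u \<in> X \<and> v \<in> X"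
        moreover have "pt u \<in> Ps" "u \<in> pt u" "pt v \<in> Ps" "v \<in> pt v" using pt that by auto
        ultimately have "pt u = X" "pt v = X" using part_unique[OF pP, of "pt u" X u] part_unique[OF pP, of "pt v" X v] by auto
        then show False using a by simp
      qed
    qed
    also have "\<dots> \<longleftrightarrow> \<pi> u \<noteq> \<pi> v" unfolding \<pi>_def using ie_inj pt that by auto
    finally show ?thesis .
  qed
  have "E = colgraph V \<pi>"
  proof (intro set_eqI iffI)
    fix ed assume "ed \<in> E"
    then obtain u v where "ed = {u,v}" "u \<in> V" "v \<in> V" "\<forall>X\<in>Ps. \<not> (u \<in> X \<and> v \<in> X)"
      using cm unfolding complete_multipartite_def by blast
    then show "ed \<in> colgraph V \<pi>" using same unfolding colgraph_def by blast
  next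
    fix ed assume "ed \<in> colgraph V \<pi>"
    then obtain u v where "ed = {u,v}" "u \<in> V" "v \<in> V" "\<pi> u \<noteq> \<pi> v" unfolding colgraph_def by blast
    then show "ed \<in> E" using same cm unfolding complete_multipartite_def by blast
  qed
  moreover have "\<forall>X\<in>Ps. \<exists>l<card Ps. {w\<in>V. \<pi> w = l} = X"
  proof
    fix X assume X: "X \<in> Ps"
    have XV: "X \<subseteq> V" using X partition_onD1[OF pP] by blast
    have "{w\<in>V. \<pi> w = inv_into {0..<card Ps} e X} = X"
    proof (intro set_eqI iffI)
      fix w assume "w \<in> {w\<in>V. \<pi> w = inv_into {0..<card Ps} e X}"
      then have "w \<in> V" "pt w = X" using ie_inj pt X unfolding \<pi>_def by auto
      then show "w \<in> X" using pt by force
    next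
      fix w assume "w \<in> X"
      then have wV: "w \<in> V" using XV by blast
      then have "pt w = X" using pt part_unique[OF pP] X \<open>w \<in> X\<close> by blast
      note wV this
      then show "w \<in> {w\<in>V. \<pi> w = inv_into {0..<card Ps} e X}" unfolding \<pi>_def by simp
    qed
    then show "\<exists>l<card Ps. {w\<in>V. \<pi> w = l} = X" using ie[OF X] by blast
  qed
  ultimately show ?thesis using pr by blast
qed




lemma least_fiber:
  fixes B :: "nat \<Rightarrow> nat"
  assumes mono: "\<And>l. B l \<le> B (Suc l)" and B0: "B 0 = 0" and w: "w < B (Suc m)"
  shows "(LEAST l. w < B (Suc l)) = t \<longleftrightarrow> B t \<le> w \<and> w < B (Suc t)"
proof
  assume a: "(LEAST l. w < B (Suc l)) = t"
  have "w < B (Suc t)" using LeastI[of "\<lambda>l. w < B (Suc l)", OF w] a by simp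
  moreover have "B t \<le> w"
  proof (cases t)
    case 0 then show ?thesis using B0 by simp
  next
    case (Suc t')
    then have "t' < (LEAST l. w < B (Suc l))" using a by simp
    then have "\<not> w < B (Suc t')" by (rule not_less_Least)
    then show ?thesis using Suc by simp
  qed
  ultimately show "B t \<le> w \<and> w < B (Suc t)" by simp
next
  assume a: "B t \<le> w \<and> w < B (Suc t)"
  show "(LEAST l. w < B (Suc l)) = t"
  proof (rule Least_equality)
    show "w < B (Suc t)" using a by simp
    fix y assume y: "w < B (Suc y)"
    show "t \<le> y"
    proof (rule ccontr)
      assume "\<not> t \<le> y"
      then have "Suc y \<le> t" by simp
      then have "B (Suc y) \<le> B t" using lift_Suc_mono_le[of B, OF mono] by blast
      then show False using a y by simp
    qed
  qed
qed

lemma rounding: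
  assumes xs: "xs \<in> smpx r" and r: "r \<ge> 1" and n: "n > 0"
  shows "\<exists>c. (\<forall>w<n. c w < r) \<and>
     (\<forall>t<r. \<bar>real (card {w\<in>{..<n}. c w = t}) / real n - xs t\<bar> \<le> 1 / real n)"
proof -
  have xr: "\<And>l. l < r \<Longrightarrow> 0 \<le> xs l" "\<And>l. l \<ge> r \<Longrightarrow> xs l = 0" "(\<Sum>l<r. xs l) = 1"
    using xs unfolding smpx_def by auto
  have xnn: "0 \<le> xs l" for l using xr by (cases "l < r") auto
  define S where "S = (\<lambda>l. \<Sum>i<l. xs i)"
  have Snn: "0 \<le> S l" for l unfolding S_def using xnn by (simp add: sum_nonneg)
  have Sm: "S l \<le> S (Suc l)" for l unfolding S_def using xnn by simp
  define B where "B = (\<lambda>l. nat \<lfloor>real n * S l\<rfloor>)"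
  have RB: "real (B l) = of_int \<lfloor>real n * S l\<rfloor>" for l
    unfolding B_def using Snn[of l] by simp
  have mono: "B l \<le> B (Suc l)" for l
    unfolding B_def using Sm[of l] by (intro nat_mono floor_mono mult_left_mono) auto
  have B0: "B 0 = 0" unfolding B_def S_def by simp
  have Br: "B r = n" unfolding B_def S_def using xr(3) by simp
  define c where "c = (\<lambda>w. LEAST l. w < B (Suc l))"
  obtain m where m: "r = Suc m" using r by (cases r) auto
  have cr: "c w < r" if "w < n" for w
  proof -
    have "w < B (Suc m)" using that Br m by simp
    then have "c w \<le> m" unfolding c_def by (rule Least_le)
    then show ?thesis using m by simp
  qed
  have Ble: "B (Suc t) \<le> n" if "t < r" for t
    using lift_Suc_mono_le[of B, OF mono, of "Suc t" r] that Br by simp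
  have fib: "{w\<in>{..<n}. c w = t} = {B t..<B (Suc t)}" if "t < r" for t
  proof (intro set_eqI iffI)
    fix w assume "w \<in> {w\<in>{..<n}. c w = t}"
    then have "w < B (Suc m)" "c w = t" using Br m by auto
    then show "w \<in> {B t..<B (Suc t)}" using least_fiber[OF mono B0] unfolding c_def by auto
  next
    fix w assume w: "w \<in> {B t..<B (Suc t)}"
    then have "w < n" using Ble[OF that] by simp
    then have "w < B (Suc m)" using Br m by simp
    then have "c w = t" using least_fiber[OF mono B0] w unfolding c_def by auto
    then show "w \<in> {w\<in>{..<n}. c w = t}" using \<open>w < n\<close> by simp
  qed
  have bound: "\<bar>real (card {w\<in>{..<n}. c w = t}) / real n - xs t\<bar> \<le> 1 / real n" if "t < r" for t
  proof -
    have "real (card {w\<in>{..<n}. c w = t}) = real (B (Suc t)) - real (B t)"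
      using fib[OF that] mono[of t] by (simp add: of_nat_diff)
    also have "\<dots> = of_int \<lfloor>real n * S (Suc t)\<rfloor> - of_int \<lfloor>real n * S t\<rfloor>" using RB by simp
    finally have e: "real (card {w\<in>{..<n}. c w = t}) = of_int \<lfloor>real n * S (Suc t)\<rfloor> - of_int \<lfloor>real n * S t\<rfloor>" .
    have d: "real n * S (Suc t) - real n * S t = real n * xs t" unfolding S_def by (simp add: algebra_simps)
    have f1: "of_int \<lfloor>real n * S (Suc t)\<rfloor> \<le> real n * S (Suc t)" "real n * S (Suc t) < of_int \<lfloor>real n * S (Suc t)\<rfloor> + 1"
      by (rule of_int_floor_le, rule real_of_int_floor_add_one_gt)
    have f2: "of_int \<lfloor>real n * S t\<rfloor> \<le> real n * S t" "real n * S t < of_int \<lfloor>real n * S t\<rfloor> + 1"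
      by (rule of_int_floor_le, rule real_of_int_floor_add_one_gt)
    have "\<bar>real (card {w\<in>{..<n}. c w = t}) - real n * xs t\<bar> \<le> 1"
      using e d f1 f2 by linarith
    then have "\<bar>real (card {w\<in>{..<n}. c w = t}) - real n * xs t\<bar> / real n \<le> 1 / real n"
      using n by (simp add: divide_right_mono)
    moreover have "\<bar>real (card {w\<in>{..<n}. c w = t}) - real n * xs t\<bar> / real n =
        \<bar>real (card {w\<in>{..<n}. c w = t}) / real n - xs t\<bar>"
      using n by (simp add: field_simps)
    ultimately show ?thesis by simp
  qed
  show ?thesis using cr bound by blast
qed




lemma ex_gen_ge:
  assumes "sgraph {..<n} E" "clique_free {..<n} E m"
  shows "count_copies HV HE {..<n} E \<le> ex_gen n HV HE m"
proof -
  have "{count_copies HV HE {..<n} E | E. sgraph {..<n} E \<and> clique_free {..<n} E m} \<subseteq>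
        (\<lambda>E. count_copies HV HE {..<n} E) ` Pow (Pow {..<n})"
    unfolding sgraph_def by blast
  then have "finite {count_copies HV HE {..<n} E | E. sgraph {..<n} E \<and> clique_free {..<n} E m}"
    by (rule finite_subset) auto
  then show ?thesis unfolding ex_gen_def using assms by (intro Max_ge) auto
qed

lemma auts_pos:
  assumes "finite HV" shows "card (auts HV HE) \<ge> 1"
proof -
  have "restrict id HV \<in> auts HV HE" unfolding auts_def
    by (auto simp: bij_betw_def inj_on_def)
  moreover have "finite (auts HV HE)" unfolding auts_def
    by (rule finite_subset[of _ "HV \<rightarrow>\<^sub>E HV"]) (use assms in \<open>auto intro: finite_PiE\<close>)
  ultimately show ?thesis by (metis One_nat_def Suc_leI card_gt_0_iff empty_iff)
qed

theorem lemma2p1: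
  fixes HV :: "'b set" and HE :: "'b set set" and k r h :: nat
  assumes "k \<ge> 2" and "r \<ge> k"
    and "sgraph HV HE"
    and "\<exists>Q. complete_multipartite HV HE Q \<and> card Q = k"
    and "card HV = h"
  shows "\<exists>\<gamma>0::real. \<gamma>0 > 0 \<and>
    (\<forall>\<gamma>::real. 0 < \<gamma> \<and> \<gamma> < \<gamma>0 \<longrightarrow>
      (\<exists>\<zeta>::real. \<zeta> > 0 \<and> (\<exists>n0::nat. \<forall>n \<ge> n0.
         \<forall>(PV::'a set) PE Ps.
           sgraph PV PE \<and> card PV = n \<and> complete_multipartite PV PE Ps \<and>
           clique_free PV PE (r + 1) \<and>
           real (count_copies HV HE PV PE) \<ge> real (ex_gen n HV HE (r + 1)) - \<zeta> * real n ^ h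
           \<longrightarrow> card Ps = r \<and> (\<forall>X\<in>Ps. real (card X) \<ge> \<gamma> * real n))))"
proof -
  have finH: "finite HV" using assms(3) unfolding sgraph_def by simp
  obtain Q where cmH: "complete_multipartite HV HE Q" and cQ: "card Q = k" using assms(4) by blast
  have r2: "2 \<le> r" using assms(1,2) by simp
  have h1: "h \<ge> 1"
  proof -
    have pQ: "partition_on HV Q" using cmH unfolding complete_multipartite_def by simp
    have "Q \<noteq> {}" using cQ assms(1) by auto
    then obtain X where "X \<in> Q" by blast
    then have "X \<noteq> {}" "X \<subseteq> HV" using partition_onD3[OF pQ] partition_onD1[OF pQ] by auto
    then have "HV \<noteq> {}" by auto
    then have "card HV > 0" using finH by (simp add: card_gt_0_iff)
    then show ?thesis using assms(5) by simp
  qed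
  have imp: "\<And>x. x \<in> smpx r \<Longrightarrow> (\<exists>l<r. x l = 0) \<Longrightarrow> \<exists>y\<in>smpx r. pp HV HE r y > pp HV HE r x"
    using improve[OF finH cmH cQ assms(1,2)] by blast
  obtain xs \<delta> m where xs: "xs \<in> smpx r" and \<delta>: "\<delta> > 0" and m: "m > 0"
    and gapp: "\<forall>x\<in>smpx r. (\<exists>l<r. x l < \<delta>) \<longrightarrow> pp HV HE r x \<le> pp HV HE r xs - m"
    using gap[OF finH r2 imp] by blast
  define A where "A = real (card (auts HV HE))"
  have A: "A \<ge> 1" unfolding A_def using auts_pos[OF finH] by simp
  define K where "K = real (card (Col HV HE r)) * real (card HV)"
  have K: "K \<ge> 0" unfolding K_def by simp
  show ?thesis
  proof (rule exI[of _ \<delta>], rule conjI)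
    show "\<delta> > 0" by (rule \<delta>)
  next
   show "\<forall>\<gamma>::real. 0 < \<gamma> \<and> \<gamma> < \<delta> \<longrightarrow>
      (\<exists>\<zeta>::real. \<zeta> > 0 \<and> (\<exists>n0::nat. \<forall>n \<ge> n0.
         \<forall>(PV::'a set) PE Ps.
           sgraph PV PE \<and> card PV = n \<and> complete_multipartite PV PE Ps \<and>
           clique_free PV PE (r + 1) \<and>
           real (count_copies HV HE PV PE) \<ge> real (ex_gen n HV HE (r + 1)) - \<zeta> * real n ^ h
           \<longrightarrow> card Ps = r \<and> (\<forall>X\<in>Ps. real (card X) \<ge> \<gamma> * real n)))"
   proof (intro allI impI)
    fix \<gamma> :: real assume \<gamma>: "0 < \<gamma> \<and> \<gamma> < \<delta>"
    define \<zeta> where "\<zeta> = m / (4 * A)"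
    define n0 where "n0 = nat \<lceil>2 * (K + real h ^ 2) / m\<rceil> + 1"
    show "\<exists>\<zeta>::real. \<zeta> > 0 \<and> (\<exists>n0::nat. \<forall>n \<ge> n0.
         \<forall>(PV::'a set) PE Ps.
           sgraph PV PE \<and> card PV = n \<and> complete_multipartite PV PE Ps \<and>
           clique_free PV PE (r + 1) \<and>
           real (count_copies HV HE PV PE) \<ge> real (ex_gen n HV HE (r + 1)) - \<zeta> * real n ^ h
           \<longrightarrow> card Ps = r \<and> (\<forall>X\<in>Ps. real (card X) \<ge> \<gamma> * real n))"
    proof (rule exI[of _ \<zeta>], rule conjI)
      show "\<zeta> > 0" unfolding \<zeta>_def using m A by simp
    next
     show "\<exists>n0::nat. \<forall>n \<ge> n0.
         \<forall>(PV::'a set) PE Ps.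
           sgraph PV PE \<and> card PV = n \<and> complete_multipartite PV PE Ps \<and>
           clique_free PV PE (r + 1) \<and>
           real (count_copies HV HE PV PE) \<ge> real (ex_gen n HV HE (r + 1)) - \<zeta> * real n ^ h
           \<longrightarrow> card Ps = r \<and> (\<forall>X\<in>Ps. real (card X) \<ge> \<gamma> * real n)"
     proof (rule exI[of _ n0], intro allI impI)
      fix n :: nat and PV :: "'a set" and PE Ps
      assume nn0: "n0 \<le> n"
      assume H: "sgraph PV PE \<and> card PV = n \<and> complete_multipartite PV PE Ps \<and>
           clique_free PV PE (r + 1) \<and>
           real (count_copies HV HE PV PE) \<ge> real (ex_gen n HV HE (r + 1)) - \<zeta> * real n ^ h"
      then have sgP: "sgraph PV PE" and cPV: "card PV = n" and cmP: "complete_multipartite PV PE Ps"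
        and cfP: "clique_free PV PE (r + 1)"
        and hyp: "real (count_copies HV HE PV PE) \<ge> real (ex_gen n HV HE (r + 1)) - \<zeta> * real n ^ h"
        by auto
      have finP: "finite PV" using sgP unfolding sgraph_def by simp
      have n1: "n \<ge> 1" using nn0 unfolding n0_def by simp
      then have npos: "n > 0" by simp
      have nbig: "real n \<ge> 2 * (K + real h ^ 2) / m"
      proof -
        have "2 * (K + real h ^ 2) / m \<le> of_int \<lceil>2 * (K + real h ^ 2) / m\<rceil>" by (rule le_of_int_ceiling)
        also have "\<dots> \<le> real (nat \<lceil>2 * (K + real h ^ 2) / m\<rceil>)" by (cases "\<lceil>2 * (K + real h ^ 2) / m\<rceil> \<ge> 0") auto
        also have "\<dots> \<le> real n"
        proof -
          have "nat \<lceil>2 * (K + real h ^ 2) / m\<rceil> \<le> n" using nn0 unfolding n0_def by linarith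
          then show ?thesis by (rule of_nat_mono)
        qed
        finally show ?thesis .
      qed
      show "card Ps = r \<and> (\<forall>X\<in>Ps. real (card X) \<ge> \<gamma> * real n)"
      proof (rule ccontr)
        assume bad: "\<not> (card Ps = r \<and> (\<forall>X\<in>Ps. real (card X) \<ge> \<gamma> * real n))"
        have sr: "card Ps \<le> r" using cm_card_le[OF cmP cfP finP] .
        obtain \<pi> where pr: "\<forall>w\<in>PV. \<pi> w < card Ps" and PEc: "PE = colgraph PV \<pi>"
          and parts: "\<forall>X\<in>Ps. \<exists>l<card Ps. {w\<in>PV. \<pi> w = l} = X"
          using cm_colgraph[OF cmP finP] by blast
        have prr: "\<And>w. w \<in> PV \<Longrightarrow> \<pi> w < r" using pr sr by force
        define xP where "xP = (\<lambda>t. real (card {w\<in>PV. \<pi> w = t}) / real n)"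
        have xPs: "xP \<in> smpx r" unfolding xP_def by (rule xof_smpx[OF finP prr cPV npos])
        have "\<exists>l<r. xP l < \<delta>"
        proof (cases "card Ps < r")
          case True
          have "{w\<in>PV. \<pi> w = card Ps} = {}" using pr by auto
          then have "xP (card Ps) = 0" unfolding xP_def by (simp only: card.empty)
          then show ?thesis using True \<delta> by auto
        next
          case False
          then have "card Ps = r" using sr by simp
          then obtain X where X: "X \<in> Ps" "real (card X) < \<gamma> * real n" using bad by auto
          then obtain l where l: "l < card Ps" "{w\<in>PV. \<pi> w = l} = X" using parts by blast
          have "xP l = real (card X) / real n" unfolding xP_def using l by simp
          also have "\<dots> < \<gamma>" using X npos by (simp add: divide_less_eq mult.commute)
          finally show ?thesis using l \<open>card Ps = r\<close> \<gamma> by auto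
        qed
        then have ppP: "pp HV HE r xP \<le> pp HV HE r xs - m" using gapp xPs by blast
        define N where "N = real n ^ h"
        define N1 where "N1 = real n ^ (h - 1)"
        have NN1: "N = N1 * real n" unfolding N_def N1_def using h1 by (cases h) auto
        have N1pos: "N1 > 0" unfolding N1_def using npos by simp
        have Npos: "N > 0" using NN1 N1pos npos by simp
        have e1: "A * real (count_copies HV HE PV PE) = real (card (embs HV HE PV PE))"
          unfolding A_def using card_embs[OF sgP finH, of HE] by simp
        have e2: "card (embs HV HE PV PE) \<le> card (homs HV HE PV PE)" by (rule embs_le_homs[OF finH finP])
        have e3: "real (card (homs HV HE PV PE)) = N * pp HV HE r xP"
          unfolding PEc N_def xP_def using real_card_homs_col[OF finH finP prr cPV npos] assms(5) by simp
        have upP: "A * real (count_copies HV HE PV PE) \<le> N * (pp HV HE r xs - m)"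
        proof -
          have "A * real (count_copies HV HE PV PE) \<le> N * pp HV HE r xP" using e1 e2 e3 by linarith
          also have "\<dots> \<le> N * (pp HV HE r xs - m)" using ppP Npos by (intro mult_left_mono) auto
          finally show ?thesis .
        qed
        obtain c where cr: "\<forall>w<n. c w < r"
          and cb: "\<forall>t<r. \<bar>real (card {w\<in>{..<n}. c w = t}) / real n - xs t\<bar> \<le> 1 / real n"
          using rounding[OF xs _ npos] r2 by auto
        define E' where "E' = colgraph {..<n} c"
        have crr: "\<And>w. w \<in> {..<n} \<Longrightarrow> c w < r" using cr by auto
        have sg': "sgraph {..<n} E'" unfolding E'_def by (rule colgraph_sgraph) simp
        have cf': "clique_free {..<n} E' (r + 1)" unfolding E'_def by (rule colgraph_clique_free) (use crr in auto)
        define x' where "x' = (\<lambda>t. real (card {w\<in>{..<n}. c w = t}) / real n)"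
        have x's: "x' \<in> smpx r" unfolding x'_def by (rule xof_smpx) (use crr npos in auto)
        have lip: "\<bar>pp HV HE r x' - pp HV HE r xs\<bar> \<le> K * (1 / real n)"
          unfolding K_def using pp_lip[OF finH x's xs, of "1 / real n" HE] cb unfolding x'_def by auto
        have f1: "A * real (count_copies HV HE {..<n} E') = real (card (embs HV HE {..<n} E'))"
          unfolding A_def using card_embs[OF sg' finH, of HE] by simp
        have f2: "card (homs HV HE {..<n} E') \<le> card (embs HV HE {..<n} E') + h ^ 2 * n ^ (h - 1)"
          using homs_embs[OF finH, of "{..<n}" HE E'] assms(5) by simp
        have f3: "real (card (homs HV HE {..<n} E')) = N * pp HV HE r x'"
          unfolding E'_def N_def x'_def using real_card_homs_col[OF finH finite_lessThan[of n] crr card_lessThan npos] assms(5) by simp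
        have f2r: "real (card (homs HV HE {..<n} E')) \<le> real (card (embs HV HE {..<n} E')) + real h ^ 2 * N1"
          using f2 unfolding N1_def by (metis of_nat_add of_nat_le_iff of_nat_mult of_nat_power)
        have "N * pp HV HE r x' \<ge> N * (pp HV HE r xs - K * (1 / real n))"
          using lip Npos by (intro mult_left_mono) auto
        moreover have "N * (K * (1 / real n)) = K * N1" using NN1 npos by (simp add: field_simps)
        ultimately have g1: "N * pp HV HE r x' \<ge> N * pp HV HE r xs - K * N1" by (simp add: algebra_simps)
        have lowP': "A * real (count_copies HV HE {..<n} E') \<ge> N * pp HV HE r xs - (K + real h ^ 2) * N1"
          using f1 f2r f3 g1 by (simp add: algebra_simps)
        have exge: "real (count_copies HV HE {..<n} E') \<le> real (ex_gen n HV HE (r + 1))"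
          using ex_gen_ge[OF sg' cf'] by simp
        have "A * real (ex_gen n HV HE (r + 1)) \<ge> A * real (count_copies HV HE {..<n} E')"
          using exge A by (intro mult_left_mono) auto
        moreover have "A * real (count_copies HV HE PV PE) \<ge> A * real (ex_gen n HV HE (r + 1)) - A * \<zeta> * N"
        proof -
          have "A * real (count_copies HV HE PV PE) \<ge> A * (real (ex_gen n HV HE (r + 1)) - \<zeta> * N)"
            using hyp A unfolding N_def by (intro mult_left_mono) auto
          then show ?thesis by (simp add: algebra_simps)
        qed
        moreover have "A * \<zeta> * N = m / 4 * N" unfolding \<zeta>_def using A by simp
        ultimately have "N * (pp HV HE r xs - m) \<ge> N * pp HV HE r xs - (K + real h ^ 2) * N1 - m / 4 * N"
          using upP lowP' by linarith
        then have c1: "(K + real h ^ 2) * N1 \<ge> 3 * m / 4 * N" by (simp add: algebra_simps)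
        have "(K + real h ^ 2) \<le> m / 2 * real n" using nbig m by (simp add: field_simps)
        then have "(K + real h ^ 2) * N1 \<le> m / 2 * real n * N1" using N1pos by (intro mult_right_mono) auto
        also have "\<dots> = m / 2 * N" using NN1 by simp
        finally have "3 * m / 4 * N \<le> m / 2 * N" using c1 by linarith
        then show False using m Npos by (simp add: field_simps)
      qed
     qed
    qed
   qed
  qed
qed



end
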